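(* For all $p\in[1,\infty)$, $$\sup_{N\in\mathbb{N},\,N\ge8\lambda pT}\ \mathbb{E}\Big[\sup_{n\in\{0,1,\dots,N\}}|D^N_n|^p\Big]<\infty.$$
   Context: Standing setting: $T\in(0,\infty)$; $(\Omega,\mathcal{F},\mathbb{P})$ with normal filtration $(\mathcal{F}_t)_{t\in[0,T]}$; $d,m\in\mathbb{N}$; $W$ an $m$-dimensional standard $(\mathcal{F}_t)$-Brownian motion; $\xi$ $\mathcal{F}_0$-measurable in $\mathbb{R}^d$ with $\mathbb{E}\|\xi\|^p<\infty$ for all $p\ge1$. $\|\cdot\|$ Euclidean/operator norm. $\mu\colon\mathbb{R}^d\to\mathbb{R}^d$ is $C^1$, $\sigma\colon\mathbb{R}^d\to\mathbb{R}^{d\times m}$, and there is $c\in(0,\infty)$ with $\|\mu'(x)\|\le c(1+\|x\|^c)$, $\|\sigma(x)-\sigma(y)\|\le c\|x-y\|$, $\langle x-y,\mu(x)-\mu(y)\rangle\le c\|x-y\|^2$. $\Delta W^N_n:=W_{(n+1)T/N}-W_{nT/N}$; tamed Euler scheme $Y^N_0=\xi$, $Y^N_{n+1}=Y^N_n+\frac{(T/N)\mu(Y^N_n)}{1+(T/N)\|\mu(Y^N_n)\|}+\sigma(Y^N_n)\Delta W^N_n$. $\lambda:=(1+2c+T+\|\mu(0)\|+\|\sigma(0)\|)^4$; $\alpha^N_n:=\mathbf{1}_{\{\|Y^N_n\|\ge1\}}\big\langle\frac{Y^N_n}{\|Y^N_n\|},\frac{\sigma(Y^N_n)}{\|Y^N_n\|}\Delta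 W^N_n\big\rangle$ (0 if $\|Y^N_n\|<1$); $D^N_n:=(\lambda+\|\xi\|)\exp\big(\lambda+\sup_{u\in\{0,\dots,n\}}\sum_{k=u}^{n-1}[\lambda\|\Delta W^N_k\|^2+\alpha^N_k]\big)$ for $n\in\{0,\dots,N\}$, empty sums being $0$. *)

theory Defs
  imports "HOL-Probability.Probability"
begin

definition op_norm :: "real^'m^'d \<Rightarrow> real" where
  "op_norm A = onorm (\<lambda>v. A *v v)"

definition normal_filtration :: "'a measure \<Rightarrow> real \<Rightarrow> (real \<Rightarrow> 'a measure) \<Rightarrow> bool" where
  "normal_filtration M T F \<longleftrightarrow>
     (\<forall>t\<in>{0..T}. space (F t) = space M \<and> sets (F t) \<subseteq> sets M) \<and>
     (\<forall>s\<in>{0..T}. \<forall>t\<in>{0..T}. s \<le> t \<longrightarrow> sets (F s) \<subseteq> sets (F t)) \<and>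
     (\<forall>t\<in>{0..<T}. (\<Inter>u\<in>{t<..T}. sets (F u)) = sets (F t)) \<and>
     (\<forall>A\<in>sets M. emeasure M A = 0 \<longrightarrow> A \<in> sets (F 0))"

definition std_brownian_motion ::
    "'a measure \<Rightarrow> real \<Rightarrow> (real \<Rightarrow> 'a measure) \<Rightarrow> (real \<Rightarrow> 'a \<Rightarrow> real^'m) \<Rightarrow> bool" where
  "std_brownian_motion M T F W \<longleftrightarrow>
     (\<forall>\<omega>\<in>space M. W 0 \<omega> = 0 \<and> continuous_on {0..T} (\<lambda>t. W t \<omega>)) \<and>
     (\<forall>t\<in>{0..T}. W t \<in> borel_measurable (F t)) \<and>
     (\<forall>s\<in>{0..T}. \<forall>t\<in>{0..T}. s < t \<longrightarrow>
        prob_space.indep_set M (sets (F s))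
          {(\<lambda>\<omega>. W t \<omega> - W s \<omega>) -` U \<inter> space M | U. U \<in> sets borel} \<and>
        prob_space.indep_vars M (\<lambda>_. borel) (\<lambda>i \<omega>. (W t \<omega> - W s \<omega>) $ i) UNIV \<and>
        (\<forall>i. distributed M lborel (\<lambda>\<omega>. (W t \<omega> - W s \<omega>) $ i)
               (\<lambda>x. ennreal (normal_density 0 (sqrt (t - s)) x))))"

definition dW :: "real \<Rightarrow> (real \<Rightarrow> 'a \<Rightarrow> real^'m) \<Rightarrow> nat \<Rightarrow> nat \<Rightarrow> 'a \<Rightarrow> real^'m" where
  "dW T W N n \<omega> = W (real (Suc n) * T / real N) \<omega> - W (real n * T / real N) \<omega>"

primrec tamed_euler ::
    "real \<Rightarrow> (real^'d \<Rightarrow> real^'d) \<Rightarrow> (real^'d \<Rightarrow> real^'m^'d) \<Rightarrow> (real \<Rightarrow> 'a \<Rightarrow> real^'m)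
      \<Rightarrow> ('a \<Rightarrow> real^'d) \<Rightarrow> nat \<Rightarrow> nat \<Rightarrow> 'a \<Rightarrow> real^'d" where
  "tamed_euler T \<mu> \<sigma> W \<xi> N 0 \<omega> = \<xi> \<omega>"
| "tamed_euler T \<mu> \<sigma> W \<xi> N (Suc n) \<omega> =
     (let y = tamed_euler T \<mu> \<sigma> W \<xi> N n \<omega>; h = T / real N in
      y + (h / (1 + h * norm (\<mu> y))) *\<^sub>R \<mu> y + \<sigma> y *v dW T W N n \<omega>)"

definition alphaN ::
    "real \<Rightarrow> (real^'d \<Rightarrow> real^'d) \<Rightarrow> (real^'d \<Rightarrow> real^'m^'d) \<Rightarrow> (real \<Rightarrow> 'a \<Rightarrow> real^'m)
      \<Rightarrow> ('a \<Rightarrow> real^'d) \<Rightarrow> nat \<Rightarrow> nat \<Rightarrow> 'a \<Rightarrow> real" where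
  "alphaN T \<mu> \<sigma> W \<xi> N n \<omega> =
     (let y = tamed_euler T \<mu> \<sigma> W \<xi> N n \<omega> in
      if norm y \<ge> 1 then inner ((1 / norm y) *\<^sub>R y) ((1 / norm y) *\<^sub>R (\<sigma> y *v dW T W N n \<omega>))
      else 0)"

definition lam :: "real \<Rightarrow> real \<Rightarrow> (real^'d \<Rightarrow> real^'d) \<Rightarrow> (real^'d \<Rightarrow> real^'m^'d) \<Rightarrow> real" where
  "lam c T \<mu> \<sigma> = (1 + 2 * c + T + norm (\<mu> 0) + op_norm (\<sigma> 0)) ^ 4"

definition DN ::
    "real \<Rightarrow> real \<Rightarrow> (real^'d \<Rightarrow> real^'d) \<Rightarrow> (real^'d \<Rightarrow> real^'m^'d) \<Rightarrow> (real \<Rightarrow> 'a \<Rightarrow> real^'m)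
      \<Rightarrow> ('a \<Rightarrow> real^'d) \<Rightarrow> nat \<Rightarrow> nat \<Rightarrow> 'a \<Rightarrow> real" where
  "DN c T \<mu> \<sigma> W \<xi> N n \<omega> =
     (let l = lam c T \<mu> \<sigma> in
      (l + norm (\<xi> \<omega>)) *
      exp (l + Max ((\<lambda>u. \<Sum>k\<in>{u..<n}. l * (norm (dW T W N k \<omega>))\<^sup>2 + alphaN T \<mu> \<sigma> W \<xi> N k \<omega>)
                    ` {0..n})))"

end

theory Submission
  imports Defs
begin

lemma norm_mat_le_op: "norm (A :: real^'m::finite^'d::finite) \<le> real CARD('d) * real CARD('m) * op_norm A"
proof -
  have "norm A \<le> (\<Sum>i\<in>UNIV. norm (A $ i))"
    unfolding norm_vec_def by (rule L2_set_le_sum) simp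
  also have "\<dots> \<le> (\<Sum>i\<in>(UNIV::'d set). \<Sum>j\<in>(UNIV::'m set). \<bar>A $ i $ j\<bar>)"
    by (intro sum_mono norm_le_l1_cart)
  also have "\<dots> \<le> (\<Sum>i\<in>(UNIV::'d set). \<Sum>j\<in>(UNIV::'m set). op_norm A)"
    unfolding op_norm_def by (intro sum_mono matrix_component_le_onorm)
  finally show ?thesis by (simp add: mult.assoc)
qed

lemma op_norm_mult: "norm (A *v x) \<le> op_norm A * norm (x::real^'m::finite)"
  for A :: "real^'m::finite^'d::finite"
  unfolding op_norm_def by (rule onorm) simp

lemma op_norm_nonneg: "0 \<le> op_norm (A :: real^'m::finite^'d::finite)"
  unfolding op_norm_def by (rule onorm_pos_le) simp

lemma op_norm_triangle: "op_norm (A + B) \<le> op_norm A + op_norm (B :: real^'m::finite^'d::finite)"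
proof -
  have "(*v) (A + B) = (\<lambda>x. A *v x + B *v x)" by (rule ext) (simp add: matrix_vector_mult_add_rdistrib)
  then show ?thesis unfolding op_norm_def using onorm_triangle[of "(*v) A" "(*v) B"] by simp
qed

lemma vm_norm: "norm (y v* A) \<le> op_norm A * norm y"
  for A :: "real^'m::finite^'d::finite"
proof -
  have "(norm (y v* A))^2 = inner (y v* A) (y v* A)" by (simp add: power2_norm_eq_inner)
  also have "\<dots> = inner y (A *v (y v* A))" by (rule dot_lmul_matrix)
  also have "\<dots> \<le> norm y * norm (A *v (y v* A))" by (rule norm_cauchy_schwarz)
  also have "\<dots> \<le> norm y * (op_norm A * norm (y v* A))"
    by (intro mult_left_mono op_norm_mult) simp
  finally have *: "(norm (y v* A))^2 \<le> (op_norm A * norm y) * norm (y v* A)" by (simp add: ac_simps)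
  show ?thesis
  proof (cases "norm (y v* A) = 0")
    case True then show ?thesis using op_norm_nonneg[of A] by simp
  next
    case False
    then have "norm (y v* A) > 0" by simp
    with * show ?thesis by (simp add: power2_eq_square)
  qed
qed

lemma cont_mv: "continuous_on UNIV (\<lambda>x::((real^'m::finite^'d::finite) \<times> (real^'m)). fst x *v snd x)"
  unfolding matrix_vector_mult_def
  by (intro continuous_intros)

lemma norm_sq_vec: "(norm (x::real^'n::finite))^2 = (\<Sum>i\<in>UNIV. (x $ i)^2)"
  unfolding power2_norm_eq_inner by (simp add: inner_vec_def power2_eq_square)

lemma nn_integral_normal_density: "s > 0 \<Longrightarrow> (\<integral>\<^sup>+x. ennreal (normal_density m s x) \<partial>lborel) = 1"
  by (subst nn_integral_eq_integral) auto

lemma gauss_lin: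
  assumes s: "s > 0"
  shows "(\<integral>\<^sup>+x. ennreal (normal_density 0 s x) * ennreal (exp (t * x)) \<partial>lborel) = ennreal (exp (t^2 * s^2 / 2))"
proof -
  have eq: "normal_density 0 s x * exp (t * x) = exp (t^2 * s^2 / 2) * normal_density (t * s^2) s x" for x
  proof -
    have "- (x - 0)\<^sup>2 / (2 * s\<^sup>2) + t * x = t^2 * s^2 / 2 + (- (x - t * s^2)\<^sup>2 / (2 * s\<^sup>2))"
      using s by (simp add: field_simps power2_eq_square)
    then have "exp (- (x - 0)\<^sup>2 / (2 * s\<^sup>2)) * exp (t * x) = exp (t^2 * s^2 / 2) * exp (- (x - t * s^2)\<^sup>2 / (2 * s\<^sup>2))"
      by (simp only: mult_exp_exp)
    then show ?thesis unfolding normal_density_def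
      by (simp only: mult.assoc) (simp only: mult.left_commute)
  qed
  have "(\<integral>\<^sup>+x. ennreal (normal_density 0 s x) * ennreal (exp (t * x)) \<partial>lborel)
      = (\<integral>\<^sup>+x. ennreal (exp (t^2 * s^2 / 2)) * ennreal (normal_density (t * s^2) s x) \<partial>lborel)"
    by (intro nn_integral_cong) (simp add: ennreal_mult'[symmetric] eq)
  also have "\<dots> = ennreal (exp (t^2 * s^2 / 2))"
    using s by (simp add: nn_integral_cmult nn_integral_normal_density)
  finally show ?thesis .
qed

lemma gauss_sq:
  assumes s: "s > 0" and a: "2 * a * s^2 < 1"
  shows "(\<integral>\<^sup>+x. ennreal (normal_density 0 s x) * ennreal (exp (a * x^2)) \<partial>lborel) = ennreal (1 / sqrt (1 - 2 * a * s^2))"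
proof -
  define q where "q = 1 - 2 * a * s^2"
  have q: "q > 0" using a by (simp add: q_def)
  define s' where "s' = s / sqrt q"
  have s': "s' > 0" using s q by (simp add: s'_def)
  have s'2: "s'^2 = s^2 / q" using q by (simp add: s'_def power_divide)
  have eq: "normal_density 0 s x * exp (a * x^2) = (1 / sqrt q) * normal_density 0 s' x" for x
  proof -
    have e1: "- (x - 0)\<^sup>2 / (2 * s\<^sup>2) + a * x^2 = - (x - 0)\<^sup>2 / (2 * s'\<^sup>2)"
      using s q by (simp add: s'2 q_def field_simps)
    have e2: "1 / sqrt (2 * pi * s\<^sup>2) = (1 / sqrt q) * (1 / sqrt (2 * pi * s'\<^sup>2))"
      using s q by (simp add: s'2 real_sqrt_divide real_sqrt_mult)
    show ?thesis unfolding normal_density_def e2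
      by (simp only: mult.assoc mult_exp_exp e1)
  qed
  have "(\<integral>\<^sup>+x. ennreal (normal_density 0 s x) * ennreal (exp (a * x^2)) \<partial>lborel)
      = (\<integral>\<^sup>+x. ennreal (1 / sqrt q) * ennreal (normal_density 0 s' x) \<partial>lborel)"
    using q by (intro nn_integral_cong) (simp add: ennreal_mult'[symmetric] eq)
  also have "\<dots> = ennreal (1 / sqrt q)"
    using s' by (simp add: nn_integral_cmult nn_integral_normal_density)
  finally show ?thesis by (simp add: q_def)
qed

lemma cont_vm: "continuous_on UNIV (\<lambda>x::((real^'m::finite^'d::finite) \<times> (real^'d)). snd x v* fst x)"
  unfolding vector_matrix_mult_def
  by (intro continuous_intros)

lemma sqrt_layer:
  assumes G: "0 \<le> (G::real)"
  shows "ennreal (sqrt G) \<le> 1 + (\<Sum>j. ennreal (2^(j+1)) * indicator {x. 4^j \<le> x} G)"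
proof (cases "G < 1")
  case True
  then have "ennreal (sqrt G) \<le> 1" using G by (simp add: ennreal_leI)
  also have "\<dots> \<le> 1 + (\<Sum>j. ennreal (2^(j+1)) * indicator {x. 4^j \<le> x} G)" by simp
  finally show ?thesis .
next
  case False
  define k where "k = nat \<lfloor>G\<rfloor>"
  have f1: "(1::int) \<le> \<lfloor>G\<rfloor>" using False by (simp add: le_floor_iff)
  then have k1: "1 \<le> k" by (simp add: k_def le_nat_iff)
  obtain j where j: "4^j \<le> k" "k < 4^(j+1)" using ex_power_ivl1[of 4 k] k1 by auto
  have kG: "real k \<le> G" "G < real k + 1" using G by (simp_all add: k_def)
  have "(4::real)^j \<le> real k" using j(1) by (metis of_nat_le_iff of_nat_numeral of_nat_power)
  then have jG: "4^j \<le> G" using kG by linarith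
  have "k + 1 \<le> 4^(j+1)" using j(2) by simp
  then have "real (k + 1) \<le> real (4^(j+1))" by (simp only: of_nat_le_iff)
  then have "real k + 1 \<le> 4^(j+1)" by simp
  then have G4: "G \<le> 4^(j+1)" using kG by simp
  have "((2::real)^(j+1))^2 = (2^2)^(j+1)" by (metis power_mult mult.commute)
  then have e: "(4::real)^(j+1) = (2^(j+1))^2" by simp
  have sG: "sqrt G \<le> 2^(j+1)" using G4 e G by (intro real_le_lsqrt) simp_all
  have "ennreal (sqrt G) \<le> ennreal (2^(j+1)) * indicator {x. 4^j \<le> x} G"
    using sG jG by (simp add: ennreal_leI)
  also have "\<dots> \<le> (\<Sum>j. ennreal (2^(j+1)) * indicator {x. 4^j \<le> x} G)"
  proof -
    define f where "f = (\<lambda>j. ennreal (2^(j+1)) * indicator {x. 4^j \<le> x} G)"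
    have "sum f {j} \<le> suminf f" by (rule sum_le_suminf[OF summableI]) auto
    then have "f j \<le> suminf f" by simp
    then show ?thesis unfolding f_def .
  qed
  also have "\<dots> \<le> 1 + (\<Sum>j. ennreal (2^(j+1)) * indicator {x. 4^j \<le> x} G)" by simp
  finally show ?thesis .
qed

lemma geom_sum4: "(\<Sum>j. ennreal (2 / 2^j)) = 4"
proof -
  have sm: "summable (\<lambda>j. 2 * (1/2::real)^j)" by (intro summable_mult summable_geometric) simp
  have "(\<Sum>j. ennreal (2 / 2^j)) = (\<Sum>j. ennreal (2 * (1/2)^j))" by (simp add: power_one_over)
  also have "\<dots> = ennreal (\<Sum>j. 2 * (1/2::real)^j)" by (rule suminf_ennreal2) (auto intro: sm)
  also have "(\<Sum>j. 2 * (1/2::real)^j) = 4"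
    using suminf_mult[OF summable_geometric[of "1/2::real"], of 2] suminf_geometric[of "1/2::real"] by simp
  finally show ?thesis by simp
qed

lemma amgm3:
  fixes a b c :: real
  assumes "0 \<le> a" "0 \<le> b" "0 \<le> c"
  shows "a * b * c \<le> a^3 + b^3 + c^3"
proof -
  define m where "m = max a (max b c)"
  have am: "a \<le> m" "b \<le> m" "c \<le> m" by (auto simp: m_def)
  have m0: "0 \<le> m" using assms am by linarith
  have "a * b * c \<le> m * m * m" using assms am by (intro mult_mono) (auto intro: mult_nonneg_nonneg)
  also have "\<dots> = m^3" by (simp add: power3_eq_cube)
  also have "\<dots> \<le> a^3 + b^3 + c^3"
  proof -
    have "m = a \<or> m = b \<or> m = c" by (auto simp: m_def max_def)
    moreover have "0 \<le> a^3" "0 \<le> b^3" "0 \<le> c^3" using assms by simp_all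
    ultimately show ?thesis by auto
  qed
  finally show ?thesis .
qed

lemma amgm4:
  fixes x y z w :: real
  assumes "0 \<le> x" "0 \<le> y" "0 \<le> z" "0 \<le> w"
  shows "x * y * z * w \<le> y^2 + x^6 + z^6 + w^6"
proof -
  define q where "q = x * z * w"
  have "x * y * z * w = y * q" by (simp add: q_def ac_simps)
  also have "\<dots> \<le> y^2 + q^2"
  proof -
    have "0 \<le> (y - q)^2" by simp
    moreover have "0 \<le> y * q" using assms by (simp add: q_def)
    ultimately show ?thesis by (simp add: power2_diff)
  qed
  also have "q^2 = x^2 * z^2 * w^2" by (simp add: q_def power_mult_distrib)
  also have "\<dots> \<le> (x^2)^3 + (z^2)^3 + (w^2)^3" by (rule amgm3) simp_all
  also have "\<dots> = x^6 + z^6 + w^6" by (simp flip: power_mult)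
  finally show ?thesis by simp
qed

lemma powr_sum_le:
  fixes a b q :: real
  assumes "0 \<le> a" "0 \<le> b" "0 \<le> q"
  shows "(a + b) powr q \<le> 2 powr q * (a powr q + b powr q)"
proof -
  have "(a + b) powr q \<le> (2 * max a b) powr q"
    using assms by (intro powr_mono2) auto
  also have "\<dots> = 2 powr q * (max a b) powr q" by (simp add: powr_mult)
  also have "(max a b) powr q \<le> a powr q + b powr q"
    by (cases "a \<le> b") (auto simp: max_def)
  then have "2 powr q * (max a b) powr q \<le> 2 powr q * (a powr q + b powr q)"
    by (intro mult_left_mono) auto
  finally show ?thesis .
qed

locale setting = prob_space M
  for M :: "'a measure" +
  fixes T c :: real and F :: "real \<Rightarrow> 'a measure"
    and W :: "real \<Rightarrow> 'a \<Rightarrow> real^'m::finite" and \<xi> :: "'a \<Rightarrow> real^'d::finite"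
    and \<mu> :: "real^'d \<Rightarrow> real^'d" and \<mu>' :: "real^'d \<Rightarrow> ((real^'d) \<Rightarrow>\<^sub>L (real^'d))"
    and \<sigma> :: "real^'d \<Rightarrow> real^'m^'d"
  assumes Tpos: "T > 0"
    and filt: "normal_filtration M T F"
    and BM: "std_brownian_motion M T F W"
    and xi_meas: "\<xi> \<in> borel_measurable (F 0)"
    and xi_mom: "\<forall>p::real. p \<ge> 1 \<longrightarrow> integrable M (\<lambda>\<omega>. norm (\<xi> \<omega>) powr p)"
    and mu_deriv: "\<forall>x. (\<mu> has_derivative blinfun_apply (\<mu>' x)) (at x)"
    and cpos: "c > 0"
    and sigma_lip: "\<forall>x y. op_norm (\<sigma> x - \<sigma> y) \<le> c * norm (x - y)"
begin

lemma mu_cont: "continuous_on UNIV \<mu>"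
  using mu_deriv by (intro continuous_at_imp_continuous_on ballI has_derivative_continuous) blast

lemma mu_meas[measurable]: "\<mu> \<in> borel_measurable borel"
  using mu_cont by (rule borel_measurable_continuous_onI)

lemma sigma_cont: "continuous_on UNIV \<sigma>"
proof -
  define C where "C = real CARD('d) * real CARD('m) * c + 1"
  have "0 \<le> real CARD('d) * real CARD('m) * c" using cpos by simp
  then have Cpos: "C > 0" by (simp add: C_def)
  have dist: "dist (\<sigma> x) (\<sigma> y) \<le> C * dist x y" for x y
  proof -
    have "dist (\<sigma> x) (\<sigma> y) \<le> real CARD('d) * real CARD('m) * op_norm (\<sigma> x - \<sigma> y)"
      by (simp add: dist_norm norm_mat_le_op)
    also have "\<dots> \<le> real CARD('d) * real CARD('m) * (c * dist x y)"
      using sigma_lip by (intro mult_left_mono) (auto simp: dist_norm)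
    also have "\<dots> \<le> C * dist x y" by (simp add: C_def algebra_simps)
    finally show ?thesis .
  qed
  show ?thesis unfolding continuous_on_iff
  proof (intro ballI allI impI)
    fix x e :: real assume "e > 0"
    show "\<exists>d>0. \<forall>x'\<in>UNIV. dist x' x < d \<longrightarrow> dist (\<sigma> x') (\<sigma> x) < e" for x
    proof (intro exI[of _ "e / C"] conjI ballI impI)
      show "e / C > 0" using \<open>e > 0\<close> Cpos by simp
      fix x' assume "dist x' x < e / C"
      then have "C * dist x' x < e" using Cpos by (simp add: field_simps)
      then show "dist (\<sigma> x') (\<sigma> x) < e" using dist[of x' x] by linarith
    qed
  qed
qed

definition tt :: "nat \<Rightarrow> nat \<Rightarrow> real" where "tt N k = real k * T / real N"

lemma tt_range: "k \<le> N \<Longrightarrow> 0 < N \<Longrightarrow> tt N k \<in> {0..T}"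
  using Tpos by (auto simp: tt_def field_simps intro: mult_right_mono)

lemma tt_mono: "k \<le> j \<Longrightarrow> tt N k \<le> tt N j"
  using Tpos by (auto simp: tt_def divide_right_mono intro: mult_right_mono)

lemma F_space: "t \<in> {0..T} \<Longrightarrow> space (F t) = space M"
  using conjunct1[OF filt[unfolded normal_filtration_def]] by simp

lemma F_sets: "t \<in> {0..T} \<Longrightarrow> sets (F t) \<subseteq> sets M"
  using conjunct1[OF filt[unfolded normal_filtration_def]] by simp

lemma F_mono: "s \<in> {0..T} \<Longrightarrow> t \<in> {0..T} \<Longrightarrow> s \<le> t \<Longrightarrow> sets (F s) \<subseteq> sets (F t)"
  using conjunct1[OF conjunct2[OF filt[unfolded normal_filtration_def]]] by simp

lemma meas_mono: "f \<in> measurable (F s) S \<Longrightarrow> s \<in> {0..T} \<Longrightarrow> t \<in> {0..T} \<Longrightarrow> s \<le> t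
  \<Longrightarrow> f \<in> measurable (F t) S"
  using F_space[of s] F_space[of t] F_mono[of s t] unfolding measurable_def by auto

lemma meas_M: "f \<in> measurable (F s) S \<Longrightarrow> s \<in> {0..T} \<Longrightarrow> f \<in> measurable M S"
  using F_space[of s] F_sets[of s] unfolding measurable_def by auto

lemma W_meas: "t \<in> {0..T} \<Longrightarrow> W t \<in> borel_measurable (F t)"
  using conjunct1[OF conjunct2[OF BM[unfolded std_brownian_motion_def]]] by simp

abbreviation "Y N k \<equiv> tamed_euler T \<mu> \<sigma> W \<xi> N k"
abbreviation "Dl N k \<equiv> dW T W N k"

lemma dW_tt: "Dl N k = (\<lambda>\<omega>. W (tt N (Suc k)) \<omega> - W (tt N k) \<omega>)"
  by (rule ext) (simp add: dW_def tt_def)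

lemma dW_meas: "k < N \<Longrightarrow> Dl N k \<in> borel_measurable (F (tt N (Suc k)))"
proof -
  assume k: "k < N"
  have r1: "tt N (Suc k) \<in> {0..T}" "tt N k \<in> {0..T}" using k tt_range[of "Suc k" N] tt_range[of k N] by auto
  have "W (tt N k) \<in> borel_measurable (F (tt N (Suc k)))"
    by (rule meas_mono[OF W_meas]) (use r1 tt_mono[of k "Suc k" N] in auto)
  moreover have "W (tt N (Suc k)) \<in> borel_measurable (F (tt N (Suc k)))" using r1 by (intro W_meas)
  ultimately show ?thesis unfolding dW_tt by (intro borel_measurable_diff)
qed

lemma step_cont: "0 \<le> hh \<Longrightarrow> continuous_on UNIV (\<lambda>x::(real^'d) \<times> (real^'m).
   fst x + (hh / (1 + hh * norm (\<mu> (fst x)))) *\<^sub>R \<mu> (fst x) + \<sigma> (fst x) *v snd x)"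
proof -
  assume hh: "0 \<le> hh"
  have c1: "continuous_on UNIV (\<lambda>x::(real^'d) \<times> (real^'m). \<mu> (fst x))"
    using continuous_on_compose2[OF mu_cont continuous_on_fst[OF continuous_on_id], of UNIV] by simp
  have c2: "continuous_on UNIV (\<lambda>x::(real^'d) \<times> (real^'m). \<sigma> (fst x))"
    using continuous_on_compose2[OF sigma_cont continuous_on_fst[OF continuous_on_id], of UNIV] by simp
  have c3: "continuous_on UNIV (\<lambda>x::(real^'d) \<times> (real^'m). \<sigma> (fst x) *v snd x)"
    using continuous_on_compose2[OF cont_mv, of UNIV "\<lambda>x. (\<sigma> (fst x), snd x)"]
      continuous_on_Pair[OF c2 continuous_on_snd[OF continuous_on_id]]
    by auto
  have "1 + hh * norm (\<mu> (fst x)) \<noteq> 0" for x :: "(real^'d) \<times> (real^'m)"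
    using hh by (metis add_pos_nonneg less_irrefl mult_nonneg_nonneg norm_ge_zero zero_less_one)
  then show ?thesis using c1 c3 by (intro continuous_on_add continuous_on_scaleR continuous_on_divide continuous_on_fst continuous_on_id continuous_on_const continuous_on_mult continuous_on_norm) auto
qed

lemma Y_meas: "k \<le> N \<Longrightarrow> 0 < N \<Longrightarrow> Y N k \<in> borel_measurable (F (tt N k))"
proof (induction k)
  case 0
  then show ?case using xi_meas by (simp add: tt_def)
next
  case (Suc k)
  have r: "tt N k \<in> {0..T}" "tt N (Suc k) \<in> {0..T}" using Suc tt_range[of "Suc k" N] tt_range[of k N] by auto
  have m1: "Y N k \<in> borel_measurable (F (tt N (Suc k)))"
    by (rule meas_mono[OF Suc.IH]) (use Suc r tt_mono[of k "Suc k" N] in auto)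
  have m2: "Dl N k \<in> borel_measurable (F (tt N (Suc k)))" using Suc by (intro dW_meas) auto
  have hh: "0 \<le> T / real N" using Tpos by simp
  show ?case
    using borel_measurable_continuous_Pair[OF m1 m2 step_cont[OF hh, unfolded split_beta']]
    by (simp add: Let_def)
qed

lemma indep_dW: "k < N \<Longrightarrow> indep_set (sets (F (tt N k))) {Dl N k -` U \<inter> space M | U. U \<in> sets borel}"
proof -
  assume k: "k < N"
  have r: "tt N k \<in> {0..T}" "tt N (Suc k) \<in> {0..T}" using k tt_range[of "Suc k" N] tt_range[of k N] by auto
  have lt: "tt N k < tt N (Suc k)" using k Tpos by (simp add: tt_def divide_strict_right_mono)
  have "\<forall>s\<in>{0..T}. \<forall>t\<in>{0..T}. s < t \<longrightarrow>
        indep_set (sets (F s)) {(\<lambda>\<omega>. W t \<omega> - W s \<omega>) -` U \<inter> space M | U. U \<in> sets borel}"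
    using conjunct2[OF conjunct2[OF BM[unfolded std_brownian_motion_def]]] by simp
  then show ?thesis using r lt unfolding dW_tt by simp
qed

lemma indep_var_dW:
  fixes V :: "'a \<Rightarrow> 'b::second_countable_topology"
  assumes k: "k < N" and V: "V \<in> borel_measurable (F (tt N k))"
  shows "indep_var borel (\<lambda>\<omega>. (V \<omega>, 0::real^'m)) borel (\<lambda>\<omega>. (undefined::'b, Dl N k \<omega>))"
proof -
  have r: "tt N k \<in> {0..T}" "tt N (Suc k) \<in> {0..T}" using k tt_range[of "Suc k" N] tt_range[of k N] by auto
  have XF: "(\<lambda>\<omega>. (V \<omega>, 0::real^'m)) \<in> borel_measurable (F (tt N k))"
    using V by (intro borel_measurable_Pair) auto
  have XM: "(\<lambda>\<omega>. (V \<omega>, 0::real^'m)) \<in> borel_measurable M" using meas_M[OF XF r(1)] .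
  have DM: "Dl N k \<in> borel_measurable M" using meas_M[OF dW_meas[OF k] r(2)] .
  have YM: "(\<lambda>\<omega>. (undefined::'b, Dl N k \<omega>)) \<in> borel_measurable M"
    using DM by (intro borel_measurable_Pair) auto
  have ind: "indep_sets (case_bool (sets (F (tt N k))) {Dl N k -` U \<inter> space M | U. U \<in> sets borel}) UNIV"
    using indep_dW[OF k] unfolding indep_set_def .
  have sub1: "{(\<lambda>\<omega>. (V \<omega>, 0::real^'m)) -` A \<inter> space M | A. A \<in> sets borel} \<subseteq> sets (F (tt N k))"
    using XF F_space[OF r(1)] unfolding measurable_def by auto
  have sub2: "{(\<lambda>\<omega>. (undefined::'b, Dl N k \<omega>)) -` A \<inter> space M | A. A \<in> sets borel}
       \<subseteq> {Dl N k -` U \<inter> space M | U. U \<in> sets borel}"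
  proof safe
    fix A :: "('b \<times> (real^'m)) set" assume A: "A \<in> sets borel"
    have "(\<lambda>x. (undefined::'b, x)) \<in> borel_measurable borel"
      by (rule borel_measurable_continuous_onI) (intro continuous_on_Pair continuous_on_const continuous_on_id)
    then have "(\<lambda>x. (undefined::'b, x)) -` A \<in> sets borel" using measurable_sets[OF _ A, of _ borel] by simp
    then show "\<exists>U. (\<lambda>\<omega>. (undefined::'b, Dl N k \<omega>)) -` A \<inter> space M = Dl N k -` U \<inter> space M \<and> U \<in> sets borel"
      by (intro exI[of _ "(\<lambda>x. (undefined::'b, x)) -` A"]) auto
  qed
  have "indep_sets (\<lambda>i. {case_bool (\<lambda>\<omega>. (V \<omega>, 0::real^'m)) (\<lambda>\<omega>. (undefined::'b, Dl N k \<omega>)) i -` A \<inter> space M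
      | A. A \<in> sets (case_bool borel borel i)}) UNIV"
    by (rule indep_sets_mono_sets[OF ind]) (use sub1 sub2 in \<open>auto split: bool.split\<close>)
  then show ?thesis unfolding indep_var_def indep_vars_def2 using XM YM by (auto split: bool.split)
qed

lemma indep_step:
  fixes V :: "'a \<Rightarrow> 'b::second_countable_topology" and g :: "'b \<times> (real^'m) \<Rightarrow> ennreal"
  assumes k: "k < N" and V: "V \<in> borel_measurable (F (tt N k))"
    and g: "g \<in> borel_measurable borel"
  shows "(\<integral>\<^sup>+\<omega>. g (V \<omega>, Dl N k \<omega>) \<partial>M) = (\<integral>\<^sup>+\<omega>. (\<integral>\<^sup>+\<omega>'. g (V \<omega>, Dl N k \<omega>') \<partial>M) \<partial>M)"
proof -
  define X where "X = (\<lambda>\<omega>. (V \<omega>, 0::real^'m))"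
  define Y where "Y = (\<lambda>\<omega>. (undefined::'b, Dl N k \<omega>))"
  define g' where "g' = (\<lambda>z::('b \<times> (real^'m)) \<times> ('b \<times> (real^'m)). g (fst (fst z), snd (snd z)))"
  have iv: "indep_var borel X borel Y" unfolding X_def Y_def by (rule indep_var_dW[OF k V])
  then have XM[measurable]: "X \<in> borel_measurable M" and YM[measurable]: "Y \<in> borel_measurable M"
    and eq: "distr M borel X \<Otimes>\<^sub>M distr M borel Y = distr M (borel \<Otimes>\<^sub>M borel) (\<lambda>x. (X x, Y x))"
    unfolding indep_var_distribution_eq by auto
  interpret D: prob_space "distr M borel Y" by (rule prob_space_distr) simp
  have "(\<lambda>z::('b \<times> (real^'m)) \<times> ('b \<times> (real^'m)). (fst (fst z), snd (snd z))) \<in> borel_measurable borel"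
    by (rule borel_measurable_continuous_onI) (intro continuous_intros)
  then have "g' \<in> borel_measurable borel"
    unfolding g'_def using measurable_compose[OF _ g] by blast
  then have gm: "g' \<in> borel_measurable (borel \<Otimes>\<^sub>M borel)" by (simp add: borel_prod)
  have gm2: "g' \<in> borel_measurable (distr M borel X \<Otimes>\<^sub>M distr M borel Y)"
    using gm by (simp add: measurable_cong_sets[OF sets_pair_measure_cong[OF sets_distr sets_distr] refl])
  have "(\<integral>\<^sup>+\<omega>. g (V \<omega>, Dl N k \<omega>) \<partial>M) = (\<integral>\<^sup>+\<omega>. g' (X \<omega>, Y \<omega>) \<partial>M)"
    by (simp add: g'_def X_def Y_def)
  also have "\<dots> = integral\<^sup>N (distr M (borel \<Otimes>\<^sub>M borel) (\<lambda>x. (X x, Y x))) g'"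
    by (subst nn_integral_distr) (auto simp: gm)
  also have "\<dots> = integral\<^sup>N (distr M borel X \<Otimes>\<^sub>M distr M borel Y) g'" by (simp add: eq)
  also have "\<dots> = (\<integral>\<^sup>+ x. \<integral>\<^sup>+ y. g' (x, y) \<partial>distr M borel Y \<partial>distr M borel X)"
    by (rule D.nn_integral_fst[symmetric]) (rule gm2)
  also have "\<dots> = (\<integral>\<^sup>+ \<omega>. \<integral>\<^sup>+ y. g' (X \<omega>, y) \<partial>distr M borel Y \<partial>M)"
    using D.borel_measurable_nn_integral_fst[OF gm2]
    by (subst nn_integral_distr) (auto simp: measurable_cong_sets[OF sets_distr refl])
  also have "\<dots> = (\<integral>\<^sup>+\<omega>. (\<integral>\<^sup>+\<omega>'. g' (X \<omega>, Y \<omega>') \<partial>M) \<partial>M)"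
    by (intro nn_integral_cong, subst nn_integral_distr) (auto intro!: measurable_compose_Pair1[OF _ gm])
  also have "\<dots> = (\<integral>\<^sup>+\<omega>. (\<integral>\<^sup>+\<omega>'. g (V \<omega>, Dl N k \<omega>') \<partial>M) \<partial>M)"
    by (simp add: g'_def X_def Y_def)
  finally show ?thesis .
qed

lemma dW_comp:
  assumes k: "k < N"
  shows "indep_vars (\<lambda>_. borel) (\<lambda>i \<omega>. Dl N k \<omega> $ i) UNIV"
    and "distributed M lborel (\<lambda>\<omega>. Dl N k \<omega> $ i) (\<lambda>x. ennreal (normal_density 0 (sqrt (T / real N)) x))"
proof -
  have r: "tt N k \<in> {0..T}" "tt N (Suc k) \<in> {0..T}" using k tt_range[of "Suc k" N] tt_range[of k N] by auto
  have lt: "tt N k < tt N (Suc k)" using k Tpos by (simp add: tt_def divide_strict_right_mono)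
  have d: "tt N (Suc k) - tt N k = T / real N" by (simp add: tt_def diff_divide_distrib[symmetric] algebra_simps)
  have "\<forall>s\<in>{0..T}. \<forall>t\<in>{0..T}. s < t \<longrightarrow>
        indep_vars (\<lambda>_. borel) (\<lambda>i \<omega>. (W t \<omega> - W s \<omega>) $ i) UNIV \<and>
        (\<forall>i. distributed M lborel (\<lambda>\<omega>. (W t \<omega> - W s \<omega>) $ i)
               (\<lambda>x. ennreal (normal_density 0 (sqrt (t - s)) x)))"
    using conjunct2[OF conjunct2[OF BM[unfolded std_brownian_motion_def]]] by simp
  then have "indep_vars (\<lambda>_. borel) (\<lambda>i \<omega>. (W (tt N (Suc k)) \<omega> - W (tt N k) \<omega>) $ i) UNIV \<and>
        (\<forall>i. distributed M lborel (\<lambda>\<omega>. (W (tt N (Suc k)) \<omega> - W (tt N k) \<omega>) $ i)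
               (\<lambda>x. ennreal (normal_density 0 (sqrt (tt N (Suc k) - tt N k)) x)))"
    using r lt by blast
  then show "indep_vars (\<lambda>_. borel) (\<lambda>i \<omega>. Dl N k \<omega> $ i) UNIV"
    and "distributed M lborel (\<lambda>\<omega>. Dl N k \<omega> $ i) (\<lambda>x. ennreal (normal_density 0 (sqrt (T / real N)) x))"
    unfolding dW_tt d by auto
qed

lemma mgf_prod:
  assumes k: "k < N" and f: "\<And>i. f i \<in> borel_measurable borel" and fnn: "\<And>i x. 0 \<le> f i x"
  shows "(\<integral>\<^sup>+\<omega>. ennreal (\<Prod>i\<in>UNIV. f i (Dl N k \<omega> $ i)) \<partial>M)
     = (\<Prod>i\<in>UNIV. \<integral>\<^sup>+x. ennreal (normal_density 0 (sqrt (T / real N)) x) * ennreal (f i x) \<partial>lborel)"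
proof -
  have iv: "indep_vars (\<lambda>_. borel) (\<lambda>i \<omega>. ennreal (f i (Dl N k \<omega> $ i))) UNIV"
    using indep_vars_compose2[OF dW_comp(1)[OF k], of "\<lambda>i x. ennreal (f i x)" "\<lambda>_. borel"] f
    by auto
  have "(\<integral>\<^sup>+\<omega>. ennreal (\<Prod>i\<in>UNIV. f i (Dl N k \<omega> $ i)) \<partial>M)
      = (\<integral>\<^sup>+\<omega>. (\<Prod>i\<in>UNIV. ennreal (f i (Dl N k \<omega> $ i))) \<partial>M)"
    using fnn by (simp add: prod_ennreal)
  also have "\<dots> = (\<Prod>i\<in>UNIV. \<integral>\<^sup>+\<omega>. ennreal (f i (Dl N k \<omega> $ i)) \<partial>M)"
    by (rule indep_vars_nn_integral[OF _ iv]) auto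
  also have "\<dots> = (\<Prod>i\<in>UNIV. \<integral>\<^sup>+x. ennreal (normal_density 0 (sqrt (T / real N)) x) * ennreal (f i x) \<partial>lborel)"
    by (intro prod.cong refl distributed_nn_integral[symmetric] dW_comp(2)[OF k]) (use f in simp)
  finally show ?thesis .
qed

lemma mgf_lin:
  assumes k: "k < N"
  shows "(\<integral>\<^sup>+\<omega>. ennreal (exp (r * inner v (Dl N k \<omega>))) \<partial>M) = ennreal (exp (r^2 * (norm v)^2 * (T / real N) / 2))"
proof -
  have N: "0 < real N" using k by simp
  have h: "sqrt (T / real N) > 0" using Tpos N by simp
  have "(\<integral>\<^sup>+\<omega>. ennreal (exp (r * inner v (Dl N k \<omega>))) \<partial>M)
     = (\<integral>\<^sup>+\<omega>. ennreal (\<Prod>i\<in>UNIV. exp ((r * v $ i) * (Dl N k \<omega> $ i))) \<partial>M)"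
    by (simp add: inner_vec_def exp_sum[symmetric] sum_distrib_left mult.assoc)
  also have "\<dots> = (\<Prod>i\<in>UNIV. \<integral>\<^sup>+x. ennreal (normal_density 0 (sqrt (T / real N)) x) * ennreal (exp ((r * v $ i) * x)) \<partial>lborel)"
    by (rule mgf_prod[OF k]) auto
  also have "\<dots> = (\<Prod>i\<in>UNIV. ennreal (exp ((r * v $ i)^2 * (sqrt (T / real N))^2 / 2)))"
    by (intro prod.cong refl gauss_lin h)
  also have "\<dots> = ennreal (exp (\<Sum>i\<in>UNIV. (r * v $ i)^2 * (sqrt (T / real N))^2 / 2))"
    by (simp add: prod_ennreal exp_sum)
  also have "(\<Sum>i\<in>UNIV. (r * v $ i)^2 * (sqrt (T / real N))^2 / 2) = r^2 * (norm v)^2 * (T / real N) / 2"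
  proof -
    have nv: "(norm v)^2 = (\<Sum>i\<in>UNIV. (v $ i)^2)"
      unfolding power2_norm_eq_inner by (simp add: inner_vec_def power2_eq_square)
    have "(r * v $ i)^2 * (sqrt (T / real N))^2 / 2 = (r^2 * (T / real N) / 2) * (v $ i)^2" for i
      using Tpos N by (simp add: power_mult_distrib)
    then have "(\<Sum>i\<in>UNIV. (r * v $ i)^2 * (sqrt (T / real N))^2 / 2) = (r^2 * (T / real N) / 2) * (\<Sum>i\<in>UNIV. (v $ i)^2)"
      by (simp add: sum_distrib_left)
    then show ?thesis by (simp add: nv)
  qed
  finally show ?thesis .
qed

lemma mgf_sq:
  assumes k: "k < N" and s: "0 \<le> s" and sh: "4 * s * (T / real N) \<le> 1"
  shows "(\<integral>\<^sup>+\<omega>. ennreal (exp (s * (norm (Dl N k \<omega>))^2)) \<partial>M) \<le> ennreal (exp (4 * s * (T / real N) * CARD('m)))"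
proof -
  have N: "0 < real N" using k by simp
  define h where "h = T / real N"
  have hpos: "h > 0" using Tpos N by (simp add: h_def)
  have hs: "sqrt h > 0" using hpos by simp
  have sq: "(sqrt h)^2 = h" using hpos by simp
  have sh': "4 * s * h \<le> 1" using sh by (simp add: h_def)
  have "2 * s * h < 1" using sh' mult_nonneg_nonneg[OF s, of h] hpos by linarith
  then have lt: "2 * s * (sqrt h)^2 < 1" by (simp add: sq)
  have b: "1 / sqrt (1 - 2 * s * h) \<le> exp (4 * s * h)"
  proof -
    define x where "x = 2 * s * h"
    have x1: "0 \<le> x" unfolding x_def using mult_nonneg_nonneg[OF s less_imp_le[OF hpos]] by (simp add: mult.commute)
    have x2: "x \<le> 1/2" unfolding x_def using sh' by (simp only: mult.assoc)
    note x = x1 x2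
    have "1 / sqrt (1 - x) \<le> 1 / (1 - x)"
    proof -
      have "0 < 1 - x" "1 - x \<le> 1" using x by auto
      then have s1: "sqrt (1 - x) \<le> 1" by simp
      have "1 - x = sqrt (1 - x) * sqrt (1 - x)" using x by simp
      also have "\<dots> \<le> sqrt (1 - x) * 1" by (rule mult_left_mono[OF s1]) (use x in simp)
      finally have "1 - x \<le> sqrt (1 - x)" by simp
      then show ?thesis using \<open>0 < 1 - x\<close> by (intro divide_left_mono) auto
    qed
    also have "\<dots> \<le> 1 + 2 * x"
      using x mult_left_mono[of "x*2" 1 x] by (simp add: field_simps)
    also have "\<dots> \<le> exp (2 * x)" by (rule exp_ge_add_one_self)
    finally show ?thesis by (simp add: x_def mult.assoc)
  qed
  have "(\<integral>\<^sup>+\<omega>. ennreal (exp (s * (norm (Dl N k \<omega>))^2)) \<partial>M)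
     = (\<integral>\<^sup>+\<omega>. ennreal (\<Prod>i\<in>UNIV. exp (s * (Dl N k \<omega> $ i)^2)) \<partial>M)"
    by (simp only: norm_sq_vec sum_distrib_left) (simp add: exp_sum)
  also have "\<dots> = (\<Prod>i\<in>(UNIV::'m set). \<integral>\<^sup>+x. ennreal (normal_density 0 (sqrt (T / real N)) x) * ennreal (exp (s * x^2)) \<partial>lborel)"
    using mgf_prod[OF k, of "\<lambda>i x. exp (s * x^2)"] by simp
  also have "\<dots> = (\<Prod>i\<in>(UNIV::'m set). ennreal (1 / sqrt (1 - 2 * s * h)))"
    using gauss_sq[OF hs lt] Tpos N by (simp add: h_def)
  also have "\<dots> \<le> (\<Prod>i\<in>(UNIV::'m set). ennreal (exp (4 * s * h)))"
    using b by (simp add: ennreal_leI power_mono)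
  also have "\<dots> = ennreal (exp (4 * s * h) ^ CARD('m))"
    by (simp add: ennreal_power)
  also have "exp (4 * s * h) ^ CARD('m) = exp (4 * s * (T / real N) * CARD('m))"
    by (simp add: exp_of_nat_mult[symmetric] h_def ac_simps)
  finally show ?thesis .
qed

definition gb :: "real^'d \<Rightarrow> real^'m" where
  "gb y = (if 1 \<le> norm y then (1 / (norm y)^2) *\<^sub>R (y v* \<sigma> y) else 0)"

definition bb :: "nat \<Rightarrow> nat \<Rightarrow> 'a \<Rightarrow> real^'m" where
  "bb N k \<omega> = gb (Y N k \<omega>)"

definition KK :: real where "KK = op_norm (\<sigma> 0) + c"

lemma sigma_meas[measurable]: "\<sigma> \<in> borel_measurable borel"
  using sigma_cont by (rule borel_measurable_continuous_onI)

lemma vm_meas[measurable]: "(\<lambda>y. y v* \<sigma> y) \<in> borel_measurable borel"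
proof -
  have "(\<lambda>y. (\<lambda>x. snd x v* fst x) (\<sigma> y, y)) \<in> borel_measurable borel"
    using borel_measurable_continuous_Pair[of \<sigma> borel "\<lambda>y. y" "\<lambda>A y. y v* A", OF sigma_meas _ ] cont_vm
    by (simp add: split_beta')
  then show ?thesis by simp
qed

lemma gb_meas[measurable]: "gb \<in> borel_measurable borel"
  unfolding gb_def by measurable

lemma bb_meas: "k \<le> N \<Longrightarrow> 0 < N \<Longrightarrow> bb N k \<in> borel_measurable (F (tt N k))"
  unfolding bb_def using measurable_compose[OF Y_meas gb_meas] by blast

lemma alpha_eq: "alphaN T \<mu> \<sigma> W \<xi> N k \<omega> = inner (bb N k \<omega>) (Dl N k \<omega>)"
proof -
  define y where "y = Y N k \<omega>"
  show ?thesis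
  proof (cases "1 \<le> norm y")
    case True
    have "inner ((1 / norm y) *\<^sub>R y) ((1 / norm y) *\<^sub>R (\<sigma> y *v Dl N k \<omega>))
        = (1 / (norm y)^2) * inner y (\<sigma> y *v Dl N k \<omega>)"
      by (simp add: power2_eq_square)
    also have "\<dots> = inner ((1 / (norm y)^2) *\<^sub>R (y v* \<sigma> y)) (Dl N k \<omega>)"
      by (simp add: dot_lmul_matrix)
    finally show ?thesis using True by (simp add: alphaN_def bb_def gb_def y_def[symmetric] Let_def)
  next
    case False
    then show ?thesis by (simp add: alphaN_def bb_def gb_def y_def[symmetric] Let_def)
  qed
qed

lemma gb_bound: "norm (gb y) \<le> KK"
proof (cases "1 \<le> norm y")
  case True
  have ny: "norm y > 0" using True by linarith
  have os: "op_norm (\<sigma> y) \<le> op_norm (\<sigma> 0) + c * norm y"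
  proof -
    have "op_norm (\<sigma> y) = op_norm (\<sigma> 0 + (\<sigma> y - \<sigma> 0))" by simp
    also have "\<dots> \<le> op_norm (\<sigma> 0) + op_norm (\<sigma> y - \<sigma> 0)" by (rule op_norm_triangle)
    also have "\<dots> \<le> op_norm (\<sigma> 0) + c * norm y" using sigma_lip by (metis add_left_mono diff_zero)
    finally show ?thesis .
  qed
  have "norm (gb y) = norm (y v* \<sigma> y) / (norm y)^2" using True by (simp add: gb_def)
  also have "\<dots> \<le> op_norm (\<sigma> y) * norm y / (norm y)^2"
    by (intro divide_right_mono vm_norm) simp
  also have "\<dots> = op_norm (\<sigma> y) / norm y" using ny by (simp add: power2_eq_square)
  also have "\<dots> \<le> (op_norm (\<sigma> 0) + c * norm y) / norm y" using os ny by (simp add: divide_right_mono)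
  also have "\<dots> = op_norm (\<sigma> 0) / norm y + c" using ny by (simp add: field_simps)
  also have "\<dots> \<le> op_norm (\<sigma> 0) + c"
  proof -
    have "op_norm (\<sigma> 0) / norm y \<le> op_norm (\<sigma> 0) / 1"
      using True op_norm_nonneg[of "\<sigma> 0"] by (intro divide_left_mono) auto
    then show ?thesis by simp
  qed
  finally show ?thesis by (simp add: KK_def)
next
  case False
  then show ?thesis using op_norm_nonneg[of "\<sigma> 0"] cpos by (simp add: gb_def KK_def)
qed

lemma KK_nonneg: "0 \<le> KK" using op_norm_nonneg[of "\<sigma> 0"] cpos by (simp add: KK_def)

lemma step_lin:
  assumes k: "k < N" and Z: "Z \<in> borel_measurable (F (tt N k))"
  shows "(\<integral>\<^sup>+\<omega>. Z \<omega> * ennreal (exp (r * inner (bb N k \<omega>) (Dl N k \<omega>))) \<partial>M)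
    = (\<integral>\<^sup>+\<omega>. Z \<omega> * ennreal (exp (r^2 * (norm (bb N k \<omega>))^2 * (T / real N) / 2)) \<partial>M)"
proof -
  define g where "g = (\<lambda>x::(ennreal \<times> (real^'m)) \<times> (real^'m). fst (fst x) * ennreal (exp (r * inner (snd (fst x)) (snd x))))"
  have gm: "g \<in> borel_measurable borel"
    unfolding g_def borel_prod[symmetric] by measurable
  have V: "(\<lambda>\<omega>. (Z \<omega>, bb N k \<omega>)) \<in> borel_measurable (F (tt N k))"
  proof -
    have N0: "0 < N" using k by simp
    note [measurable] = Z bb_meas[OF less_imp_le[OF k] N0]
    show ?thesis unfolding borel_prod[symmetric] by measurable
  qed
  have "(\<integral>\<^sup>+\<omega>. Z \<omega> * ennreal (exp (r * inner (bb N k \<omega>) (Dl N k \<omega>))) \<partial>M)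
      = (\<integral>\<^sup>+\<omega>. g ((Z \<omega>, bb N k \<omega>), Dl N k \<omega>) \<partial>M)" by (simp add: g_def)
  also have "\<dots> = (\<integral>\<^sup>+\<omega>. (\<integral>\<^sup>+\<omega>'. g ((Z \<omega>, bb N k \<omega>), Dl N k \<omega>') \<partial>M) \<partial>M)"
    by (rule indep_step[OF k V gm])
  also have "\<dots> = (\<integral>\<^sup>+\<omega>. Z \<omega> * ennreal (exp (r^2 * (norm (bb N k \<omega>))^2 * (T / real N) / 2)) \<partial>M)"
  proof (intro nn_integral_cong)
    fix \<omega>
    have "(\<integral>\<^sup>+\<omega>'. g ((Z \<omega>, bb N k \<omega>), Dl N k \<omega>') \<partial>M)
        = Z \<omega> * (\<integral>\<^sup>+\<omega>'. ennreal (exp (r * inner (bb N k \<omega>) (Dl N k \<omega>'))) \<partial>M)"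
    proof -
      have DM[measurable]: "Dl N k \<in> borel_measurable M"
        using meas_M[OF dW_meas[OF k]] k tt_range[of "Suc k" N] by auto
      show ?thesis unfolding g_def by (subst nn_integral_cmult[symmetric]) auto
    qed
    also have "\<dots> = Z \<omega> * ennreal (exp (r^2 * (norm (bb N k \<omega>))^2 * (T / real N) / 2))"
      by (simp add: mgf_lin[OF k])
    finally show "(\<integral>\<^sup>+\<omega>'. g ((Z \<omega>, bb N k \<omega>), Dl N k \<omega>') \<partial>M) = Z \<omega> * ennreal (exp (r^2 * (norm (bb N k \<omega>))^2 * (T / real N) / 2))" .
  qed
  finally show ?thesis .
qed

lemma step_sq:
  assumes k: "k < N" and Z: "Z \<in> borel_measurable (F (tt N k))"
    and s: "0 \<le> s" and sh: "4 * s * (T / real N) \<le> 1"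
  shows "(\<integral>\<^sup>+\<omega>. Z \<omega> * ennreal (exp (s * (norm (Dl N k \<omega>))^2)) \<partial>M)
    \<le> (\<integral>\<^sup>+\<omega>. Z \<omega> \<partial>M) * ennreal (exp (4 * s * (T / real N) * CARD('m)))"
proof -
  define g where "g = (\<lambda>x::ennreal \<times> (real^'m). fst x * ennreal (exp (s * (norm (snd x))^2)))"
  have gm: "g \<in> borel_measurable borel"
    unfolding g_def borel_prod[symmetric] by measurable
  have r: "tt N k \<in> {0..T}" using k tt_range[of k N] by auto
  have "(\<integral>\<^sup>+\<omega>. Z \<omega> * ennreal (exp (s * (norm (Dl N k \<omega>))^2)) \<partial>M)
      = (\<integral>\<^sup>+\<omega>. g (Z \<omega>, Dl N k \<omega>) \<partial>M)" by (simp add: g_def)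
  also have "\<dots> = (\<integral>\<^sup>+\<omega>. (\<integral>\<^sup>+\<omega>'. g (Z \<omega>, Dl N k \<omega>') \<partial>M) \<partial>M)"
    by (rule indep_step[OF k Z gm])
  also have "\<dots> \<le> (\<integral>\<^sup>+\<omega>. Z \<omega> * ennreal (exp (4 * s * (T / real N) * CARD('m))) \<partial>M)"
  proof (intro nn_integral_mono)
    fix \<omega>
    have "(\<integral>\<^sup>+\<omega>'. g (Z \<omega>, Dl N k \<omega>') \<partial>M)
        = Z \<omega> * (\<integral>\<^sup>+\<omega>'. ennreal (exp (s * (norm (Dl N k \<omega>'))^2)) \<partial>M)"
    proof -
      have DM[measurable]: "Dl N k \<in> borel_measurable M"
        using meas_M[OF dW_meas[OF k]] k tt_range[of "Suc k" N] by auto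
      show ?thesis unfolding g_def by (subst nn_integral_cmult[symmetric]) auto
    qed
    also have "\<dots> \<le> Z \<omega> * ennreal (exp (4 * s * (T / real N) * CARD('m)))"
      by (intro mult_left_mono mgf_sq[OF k s sh]) simp
    finally show "(\<integral>\<^sup>+\<omega>'. g (Z \<omega>, Dl N k \<omega>') \<partial>M) \<le> Z \<omega> * ennreal (exp (4 * s * (T / real N) * CARD('m)))" .
  qed
  also have "\<dots> = (\<integral>\<^sup>+\<omega>. Z \<omega> \<partial>M) * ennreal (exp (4 * s * (T / real N) * CARD('m)))"
    using meas_M[OF Z r] by (simp add: nn_integral_multc)
  finally show ?thesis .
qed

lemma set_le_F: "f \<in> borel_measurable M' \<Longrightarrow> {x \<in> space M'. (a::real) \<le> f x} \<in> sets M'"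
  by measurable

lemma ville:
  fixes X :: "nat \<Rightarrow> 'a \<Rightarrow> real"
  assumes N0: "0 < N"
    and Xm: "\<And>n. n \<le> N \<Longrightarrow> X n \<in> borel_measurable (F (tt N n))"
    and Xnn: "\<And>n \<omega>. 0 \<le> X n \<omega>"
    and sub: "\<And>j g. j \<le> N \<Longrightarrow> g \<in> borel_measurable (F (tt N j)) \<Longrightarrow>
        (\<integral>\<^sup>+\<omega>. g \<omega> * ennreal (X j \<omega>) \<partial>M) \<le> (\<integral>\<^sup>+\<omega>. g \<omega> * ennreal (X N \<omega>) \<partial>M)"
    and a: "0 < a"
  shows "ennreal a * emeasure M {\<omega>\<in>space M. a \<le> Max ((\<lambda>n. X n \<omega>) ` {0..N})} \<le> (\<integral>\<^sup>+\<omega>. ennreal (X N \<omega>) \<partial>M)"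
proof -
  define B where "B n = {\<omega>\<in>space M. a \<le> X n \<omega>} - (\<Union>j\<in>{..<n}. {\<omega>\<in>space M. a \<le> X j \<omega>})" for n
  have rg: "n \<le> N \<Longrightarrow> tt N n \<in> {0..T}" for n using tt_range N0 by auto
  have XmF: "j \<le> n \<Longrightarrow> n \<le> N \<Longrightarrow> X j \<in> borel_measurable (F (tt N n))" for j n
    by (rule meas_mono[OF Xm]) (use rg[of j] rg[of n] tt_mono[of j n N] in auto)
  have XM[measurable]: "n \<le> N \<Longrightarrow> X n \<in> borel_measurable M" for n using meas_M[OF Xm rg] .
  have BF: "n \<le> N \<Longrightarrow> B n \<in> sets (F (tt N n))" for n
  proof -
    assume n: "n \<le> N"
    have sp: "space (F (tt N n)) = space M" using F_space[OF rg[OF n]] .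
    have "{\<omega>\<in>space M. a \<le> X j \<omega>} \<in> sets (F (tt N n))" if "j \<le> n" for j
      using set_le_F[OF XmF[OF that n], of a] sp by simp
    then show ?thesis unfolding B_def by (intro sets.Diff sets.finite_UN) auto
  qed
  have BM: "n \<le> N \<Longrightarrow> B n \<in> sets M" for n using BF F_sets rg by blast
  define G where "G \<omega> = Max ((\<lambda>n. X n \<omega>) ` {0..N})" for \<omega>
  have Gle: "a \<le> G \<omega> \<longleftrightarrow> (\<exists>n\<le>N. a \<le> X n \<omega>)" for \<omega>
    unfolding G_def by (subst Max_ge_iff) auto
  have GM: "{\<omega>\<in>space M. a \<le> G \<omega>} \<in> sets M"
  proof -
    have "{\<omega>\<in>space M. a \<le> G \<omega>} = (\<Union>n\<in>{..N}. {\<omega>\<in>space M. a \<le> X n \<omega>})" using Gle by auto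
    also have "\<dots> \<in> sets M" by (intro sets.finite_UN) auto
    finally show ?thesis .
  qed
  have uniq: "\<omega> \<in> B n \<Longrightarrow> \<omega> \<in> B m \<Longrightarrow> n = m" for \<omega> n m
    unfolding B_def by (cases n m rule: linorder_cases) auto
  have pt1: "ennreal a * indicator {\<omega>\<in>space M. a \<le> G \<omega>} \<omega> \<le> (\<Sum>n\<in>{..N}. indicator (B n) \<omega> * ennreal (X n \<omega>))"
    if \<omega>: "\<omega> \<in> space M" for \<omega>
  proof (cases "a \<le> G \<omega>")
    case True
    then obtain n where n: "n \<le> N" "a \<le> X n \<omega>" using Gle by blast
    define n0 where "n0 = (LEAST n. a \<le> X n \<omega>)"
    have n0: "a \<le> X n0 \<omega>" unfolding n0_def by (rule LeastI[of _ n]) (rule n(2))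
    have "n0 \<le> n" unfolding n0_def by (rule Least_le) (rule n(2))
    then have n0le: "n0 \<le> N" using n(1) by linarith
    have nl: "\<not> a \<le> X j \<omega>" if "j < n0" for j
      using not_less_Least[of j "\<lambda>n. a \<le> X n \<omega>"] that unfolding n0_def by blast
    have "\<omega> \<in> B n0" unfolding B_def using \<omega> n0 nl by blast
    then have "ennreal a \<le> indicator (B n0) \<omega> * ennreal (X n0 \<omega>)" using n0 by (simp add: ennreal_leI)
    also have "\<dots> \<le> (\<Sum>n\<in>{..N}. indicator (B n) \<omega> * ennreal (X n \<omega>))"
      by (rule member_le_sum) (use n0le in auto)
    finally show ?thesis using True \<omega> by simp
  next
    case False
    then show ?thesis by simp
  qed
  have pt2: "(\<Sum>n\<in>{..N}. indicator (B n) \<omega> * ennreal (X N \<omega>)) \<le> ennreal (X N \<omega>)" for \<omega>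
  proof (cases "\<exists>n\<le>N. \<omega> \<in> B n")
    case True
    then obtain n0 where n0: "n0 \<le> N" "\<omega> \<in> B n0" by blast
    have "(\<Sum>n\<in>{..N}. indicator (B n) \<omega> * ennreal (X N \<omega>)) = (\<Sum>n\<in>{..N}. if n = n0 then ennreal (X N \<omega>) else 0)"
      using uniq n0 by (intro sum.cong refl) (auto simp: indicator_def)
    also have "\<dots> = ennreal (X N \<omega>)" using n0 by simp
    finally show ?thesis by simp
  next
    case False
    then have z: "(\<Sum>n\<in>{..N}. indicator (B n) \<omega> * ennreal (X N \<omega>)) = 0"
      by (intro sum.neutral) (auto simp: indicator_def)
    show ?thesis by (subst z) simp
  qed
  have IM: "(\<lambda>x. indicator (B n) x * ennreal (X j x)) \<in> borel_measurable M" if "n \<le> N" "j \<le> N" for n j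
  proof -
    note [measurable] = BM[OF that(1)] XM[OF that(2)]
    show ?thesis by measurable
  qed
  have "ennreal a * emeasure M {\<omega>\<in>space M. a \<le> G \<omega>} = (\<integral>\<^sup>+\<omega>. ennreal a * indicator {\<omega>\<in>space M. a \<le> G \<omega>} \<omega> \<partial>M)"
    by (rule nn_integral_cmult_indicator[symmetric, OF GM])
  also have "\<dots> \<le> (\<integral>\<^sup>+\<omega>. (\<Sum>n\<in>{..N}. indicator (B n) \<omega> * ennreal (X n \<omega>)) \<partial>M)"
    by (intro nn_integral_mono pt1)
  also have "\<dots> = (\<Sum>n\<in>{..N}. \<integral>\<^sup>+\<omega>. indicator (B n) \<omega> * ennreal (X n \<omega>) \<partial>M)"
    by (intro nn_integral_sum) (auto intro: IM)
  also have "\<dots> \<le> (\<Sum>n\<in>{..N}. \<integral>\<^sup>+\<omega>. indicator (B n) \<omega> * ennreal (X N \<omega>) \<partial>M)"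
    by (intro sum_mono sub) (auto intro: BF borel_measurable_indicator)
  also have "\<dots> = (\<integral>\<^sup>+\<omega>. (\<Sum>n\<in>{..N}. indicator (B n) \<omega> * ennreal (X N \<omega>)) \<partial>M)"
    by (intro nn_integral_sum[symmetric]) (auto intro: IM)
  also have "\<dots> \<le> (\<integral>\<^sup>+\<omega>. ennreal (X N \<omega>) \<partial>M)"
    by (intro nn_integral_mono pt2)
  finally show ?thesis by (simp add: G_def)
qed

lemma layer:
  fixes X :: "nat \<Rightarrow> 'a \<Rightarrow> real"
  assumes N0: "0 < N"
    and Xm: "\<And>n. n \<le> N \<Longrightarrow> X n \<in> borel_measurable (F (tt N n))"
    and Xnn: "\<And>n \<omega>. 0 \<le> X n \<omega>"
    and sub: "\<And>j g. j \<le> N \<Longrightarrow> g \<in> borel_measurable (F (tt N j)) \<Longrightarrow>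
        (\<integral>\<^sup>+\<omega>. g \<omega> * ennreal (X j \<omega>) \<partial>M) \<le> (\<integral>\<^sup>+\<omega>. g \<omega> * ennreal (X N \<omega>) \<partial>M)"
  shows "(\<integral>\<^sup>+\<omega>. ennreal (sqrt (Max ((\<lambda>n. X n \<omega>) ` {0..N}))) \<partial>M) \<le> 1 + 4 * (\<integral>\<^sup>+\<omega>. ennreal (X N \<omega>) \<partial>M)"
proof -
  define G where "G \<omega> = Max ((\<lambda>n. X n \<omega>) ` {0..N})" for \<omega>
  define E where "E = (\<integral>\<^sup>+\<omega>. ennreal (X N \<omega>) \<partial>M)"
  define S where "S j = {\<omega>\<in>space M. (4::real)^j \<le> G \<omega>}" for j
  have rg: "n \<le> N \<Longrightarrow> tt N n \<in> {0..T}" for n using tt_range N0 by auto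
  have XM[measurable]: "n \<le> N \<Longrightarrow> X n \<in> borel_measurable M" for n using meas_M[OF Xm rg] .
  have G0: "0 \<le> G \<omega>" for \<omega>
  proof -
    have "X 0 \<omega> \<le> G \<omega>" unfolding G_def by (intro Max_ge) auto
    then show ?thesis using Xnn[of 0 \<omega>] by linarith
  qed
  have SM: "S j \<in> sets M" for j
  proof -
    have "S j = (\<Union>n\<in>{..N}. {\<omega>\<in>space M. 4^j \<le> X n \<omega>})"
      unfolding S_def G_def by (subst Max_ge_iff) auto
    also have "\<dots> \<in> sets M" by (intro sets.finite_UN) auto
    finally show ?thesis .
  qed
  have vl: "ennreal (4^j) * emeasure M (S j) \<le> E" for j
    unfolding S_def G_def E_def by (rule ville[OF N0 Xm Xnn sub]) auto
  have "(\<integral>\<^sup>+\<omega>. ennreal (sqrt (G \<omega>)) \<partial>M) \<le> (\<integral>\<^sup>+\<omega>. 1 + (\<Sum>j. ennreal (2^(j+1)) * indicator (S j) \<omega>) \<partial>M)"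
  proof (intro nn_integral_mono)
    fix \<omega> assume \<omega>: "\<omega> \<in> space M"
    have eq: "(\<lambda>j. ennreal (2^(j+1)) * indicator (S j) \<omega>) = (\<lambda>j. ennreal (2^(j+1)) * indicator {x. 4^j \<le> x} (G \<omega>))"
      using \<omega> by (intro ext) (simp add: S_def indicator_def)
    show "ennreal (sqrt (G \<omega>)) \<le> 1 + (\<Sum>j. ennreal (2^(j+1)) * indicator (S j) \<omega>)"
      unfolding eq by (rule sqrt_layer[OF G0[of \<omega>]])
  qed
  also have "\<dots> = 1 + (\<Sum>j. ennreal (2^(j+1)) * emeasure M (S j))"
    using SM by (simp add: nn_integral_add nn_integral_suminf nn_integral_cmult_indicator emeasure_space_1)
  also have "\<dots> \<le> 1 + (\<Sum>j. E * ennreal (2 / 2^j))"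
  proof (intro add_left_mono suminf_le summableI)
    fix j :: nat
    have "ennreal (2^(j+1)) * emeasure M (S j) = ennreal (2 / 2^j) * (ennreal (4^j) * emeasure M (S j))"
    proof -
      have "(2::real)^(j+1) = (2 / 2^j) * 4^j"
      proof -
        have "(4::real)^j = 2^j * 2^j" by (metis power_mult_distrib mult_2_right numeral_Bit0 power_add mult.commute
              numeral_times_numeral semiring_norm(13) semiring_norm(2))
        then show ?thesis by simp
      qed
      then have "ennreal (2^(j+1)) = ennreal (2 / 2^j) * ennreal (4^j)"
        by (simp only:) (rule ennreal_mult; simp)
      then show ?thesis by (simp only: mult.assoc)
    qed
    also have "\<dots> \<le> ennreal (2 / 2^j) * E" by (intro mult_left_mono vl) simp
    finally show "ennreal (2^(j+1)) * emeasure M (S j) \<le> E * ennreal (2 / 2^j)" by (simp add: mult.commute)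
  qed
  also have "\<dots> = 1 + 4 * E" by (simp add: geom_sum4 mult.commute)
  finally show ?thesis by (simp add: G_def E_def)
qed

definition AA :: "nat \<Rightarrow> nat \<Rightarrow> 'a \<Rightarrow> real" where
  "AA N n \<omega> = (\<Sum>k<n. inner (bb N k \<omega>) (Dl N k \<omega>))"

definition XX :: "real \<Rightarrow> nat \<Rightarrow> nat \<Rightarrow> 'a \<Rightarrow> real" where
  "XX r N n \<omega> = exp (r * AA N n \<omega>)"

lemma term_meas:
  assumes "k < n" "n \<le> N"
  shows "(\<lambda>\<omega>. inner (bb N k \<omega>) (Dl N k \<omega>)) \<in> borel_measurable (F (tt N n))"
proof -
  have N0: "0 < N" using assms by simp
  have r: "tt N k \<in> {0..T}" "tt N (Suc k) \<in> {0..T}" "tt N n \<in> {0..T}"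
    using assms tt_range[of k N] tt_range[of "Suc k" N] tt_range[of n N] by auto
  have [measurable]: "bb N k \<in> borel_measurable (F (tt N n))"
    by (rule meas_mono[OF bb_meas]) (use assms r tt_mono[of k n N] in auto)
  have [measurable]: "Dl N k \<in> borel_measurable (F (tt N n))"
    by (rule meas_mono[OF dW_meas]) (use assms r tt_mono[of "Suc k" n N] in auto)
  show ?thesis by measurable
qed

lemma AA_meas: "n \<le> N \<Longrightarrow> AA N n \<in> borel_measurable (F (tt N n))"
  unfolding AA_def by (intro borel_measurable_sum term_meas) auto

lemma XX_meas: "n \<le> N \<Longrightarrow> XX r N n \<in> borel_measurable (F (tt N n))"
  unfolding XX_def using AA_meas[of n N] by measurable

lemma XX_nonneg: "0 \<le> XX r N n \<omega>" by (simp add: XX_def)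

lemma XX_Suc: "XX r N (Suc n) \<omega> = XX r N n \<omega> * exp (r * inner (bb N n \<omega>) (Dl N n \<omega>))"
  by (simp add: XX_def AA_def distrib_left exp_add)

lemma submart1:
  assumes n: "n < N" and g: "g \<in> borel_measurable (F (tt N n))"
  shows "(\<integral>\<^sup>+\<omega>. g \<omega> * ennreal (XX r N n \<omega>) \<partial>M) \<le> (\<integral>\<^sup>+\<omega>. g \<omega> * ennreal (XX r N (Suc n) \<omega>) \<partial>M)"
proof -
  have Zm: "(\<lambda>\<omega>. g \<omega> * ennreal (XX r N n \<omega>)) \<in> borel_measurable (F (tt N n))"
    using g XX_meas[OF less_imp_le[OF n], of r] by measurable
  have "(\<integral>\<^sup>+\<omega>. g \<omega> * ennreal (XX r N n \<omega>) \<partial>M)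
      \<le> (\<integral>\<^sup>+\<omega>. (g \<omega> * ennreal (XX r N n \<omega>)) * ennreal (exp (r^2 * (norm (bb N n \<omega>))^2 * (T / real N) / 2)) \<partial>M)"
  proof (intro nn_integral_mono)
    fix \<omega>
    have "0 \<le> r^2 * (norm (bb N n \<omega>))^2 * (T / real N) / 2" using Tpos by simp
    then have "(1::ennreal) \<le> ennreal (exp (r^2 * (norm (bb N n \<omega>))^2 * (T / real N) / 2))"
      by (simp add: ennreal_leI)
    from mult_left_mono[OF this, of "g \<omega> * ennreal (XX r N n \<omega>)"]
    show "g \<omega> * ennreal (XX r N n \<omega>) \<le> g \<omega> * ennreal (XX r N n \<omega>) * ennreal (exp (r^2 * (norm (bb N n \<omega>))^2 * (T / real N) / 2))"
      by simp
  qed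
  also have "\<dots> = (\<integral>\<^sup>+\<omega>. (g \<omega> * ennreal (XX r N n \<omega>)) * ennreal (exp (r * inner (bb N n \<omega>) (Dl N n \<omega>))) \<partial>M)"
    by (rule step_lin[OF n Zm, symmetric])
  also have "\<dots> = (\<integral>\<^sup>+\<omega>. g \<omega> * ennreal (XX r N (Suc n) \<omega>) \<partial>M)"
    by (simp add: XX_Suc ennreal_mult mult.assoc XX_nonneg)
  finally show ?thesis .
qed

lemma submart:
  assumes jn: "j \<le> n" and nN: "n \<le> N" and g: "g \<in> borel_measurable (F (tt N j))"
  shows "(\<integral>\<^sup>+\<omega>. g \<omega> * ennreal (XX r N j \<omega>) \<partial>M) \<le> (\<integral>\<^sup>+\<omega>. g \<omega> * ennreal (XX r N n \<omega>) \<partial>M)"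
  using jn nN
proof (induction n rule: dec_induct)
  case base
  then show ?case by simp
next
  case (step n)
  have N0: "0 < N" using step by simp
  have gn: "g \<in> borel_measurable (F (tt N n))"
    by (rule meas_mono[OF g]) (use step tt_range[of j N] tt_range[of n N] N0 tt_mono[of j n N] in auto)
  have "(\<integral>\<^sup>+\<omega>. g \<omega> * ennreal (XX r N j \<omega>) \<partial>M) \<le> (\<integral>\<^sup>+\<omega>. g \<omega> * ennreal (XX r N n \<omega>) \<partial>M)"
    using step by simp
  also have "\<dots> \<le> (\<integral>\<^sup>+\<omega>. g \<omega> * ennreal (XX r N (Suc n) \<omega>) \<partial>M)"
    using submart1[OF _ gn] step by simp
  finally show ?case .
qed

lemma growth:
  assumes nN: "n \<le> N" and N0: "0 < N"
  shows "(\<integral>\<^sup>+\<omega>. ennreal (XX r N n \<omega>) \<partial>M) \<le> ennreal (exp (r^2 * KK^2 * (T / real N) / 2)) ^ n"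
  using nN
proof (induction n)
  case 0
  then show ?case by (simp add: XX_def AA_def emeasure_space_1)
next
  case (Suc n)
  have n: "n < N" using Suc by simp
  have Zm: "(\<lambda>\<omega>. ennreal (XX r N n \<omega>)) \<in> borel_measurable (F (tt N n))"
    using XX_meas[OF less_imp_le[OF n], of r] by measurable
  have r0: "tt N n \<in> {0..T}" using tt_range[of n N] n by simp
  have "(\<integral>\<^sup>+\<omega>. ennreal (XX r N (Suc n) \<omega>) \<partial>M)
      = (\<integral>\<^sup>+\<omega>. ennreal (XX r N n \<omega>) * ennreal (exp (r * inner (bb N n \<omega>) (Dl N n \<omega>))) \<partial>M)"
    by (simp add: XX_Suc ennreal_mult XX_nonneg)
  also have "\<dots> = (\<integral>\<^sup>+\<omega>. ennreal (XX r N n \<omega>) * ennreal (exp (r^2 * (norm (bb N n \<omega>))^2 * (T / real N) / 2)) \<partial>M)"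
    by (rule step_lin[OF n Zm])
  also have "\<dots> \<le> (\<integral>\<^sup>+\<omega>. ennreal (XX r N n \<omega>) * ennreal (exp (r^2 * KK^2 * (T / real N) / 2)) \<partial>M)"
  proof (intro nn_integral_mono mult_left_mono ennreal_leI)
    fix \<omega>
    have "(norm (bb N n \<omega>))^2 \<le> KK^2"
      unfolding bb_def by (intro power_mono gb_bound) simp
    then have "r^2 * (norm (bb N n \<omega>))^2 * (T / real N) / 2 \<le> r^2 * KK^2 * (T / real N) / 2"
      using Tpos by (intro divide_right_mono mult_right_mono mult_left_mono) auto
    then show "exp (r^2 * (norm (bb N n \<omega>))^2 * (T / real N) / 2) \<le> exp (r^2 * KK^2 * (T / real N) / 2)" by simp
  qed simp
  also have "\<dots> = (\<integral>\<^sup>+\<omega>. ennreal (XX r N n \<omega>) \<partial>M) * ennreal (exp (r^2 * KK^2 * (T / real N) / 2))"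
    using meas_M[OF Zm r0] by (simp add: nn_integral_multc)
  also have "\<dots> \<le> ennreal (exp (r^2 * KK^2 * (T / real N) / 2)) ^ n * ennreal (exp (r^2 * KK^2 * (T / real N) / 2))"
    using Suc by (intro mult_right_mono) auto
  finally show ?case by (simp add: mult.commute)
qed

lemma growthN:
  assumes N0: "0 < N"
  shows "(\<integral>\<^sup>+\<omega>. ennreal (XX r N N \<omega>) \<partial>M) \<le> ennreal (exp (r^2 * KK^2 * T / 2))"
proof -
  have "ennreal (exp (r^2 * KK^2 * (T / real N) / 2)) ^ N = ennreal (exp (r^2 * KK^2 * (T / real N) / 2) ^ N)"
    by (simp add: ennreal_power)
  also have "exp (r^2 * KK^2 * (T / real N) / 2) ^ N = exp (r^2 * KK^2 * T / 2)"
    using N0 by (simp add: exp_of_nat_mult[symmetric])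
  finally show ?thesis using growth[OF order_refl N0, of r] by simp
qed

lemma exp_pow: "exp (x::real) ^ n = exp (real n * x)"
  by (simp add: exp_of_nat_mult)

lemma sqrt_exp2: "sqrt (exp (2 * (x::real))) = exp x"
proof -
  have "exp (2 * x) = (exp x)^2" by (simp add: exp_pow)
  then show ?thesis by simp
qed

lemma lam_ge1: "1 \<le> lam c T \<mu> \<sigma>"
proof -
  have "1 \<le> 1 + 2 * c + T + norm (\<mu> 0) + op_norm (\<sigma> 0)"
    using cpos Tpos op_norm_nonneg[of "\<sigma> 0"] by simp
  then show ?thesis unfolding lam_def by (rule one_le_power)
qed

lemma DN_bound:
  assumes N0: "0 < N" and n: "n \<le> N" and p: "0 < p"
  shows "\<bar>DN c T \<mu> \<sigma> W \<xi> N n \<omega>\<bar> powr p \<le>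
     exp (2 * p * lam c T \<mu> \<sigma> * (\<Sum>k<N. (norm (Dl N k \<omega>))^2))
     + (lam c T \<mu> \<sigma> + norm (\<xi> \<omega>)) powr (6 * p) * exp (6 * p * lam c T \<mu> \<sigma>)
     + sqrt (Max ((\<lambda>n. XX (12 * p) N n \<omega>) ` {0..N}))
     + sqrt (Max ((\<lambda>n. XX (- 12 * p) N n \<omega>) ` {0..N}))"
proof -
  define l where "l = lam c T \<mu> \<sigma>"
  have l1: "1 \<le> l" using lam_ge1 by (simp add: l_def)
  define S where "S u = (\<Sum>k\<in>{u..<n}. l * (norm (Dl N k \<omega>))\<^sup>2 + alphaN T \<mu> \<sigma> W \<xi> N k \<omega>)" for u
  define Mx where "Mx = Max (S ` {0..n})"
  define SN where "SN = (\<Sum>k<N. (norm (Dl N k \<omega>))^2)"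
  have DNeq: "DN c T \<mu> \<sigma> W \<xi> N n \<omega> = (l + norm (\<xi> \<omega>)) * exp (l + Mx)"
    unfolding DN_def Let_def Mx_def S_def l_def ..
  have "Mx \<in> S ` {0..n}" unfolding Mx_def by (rule Max_in) auto
  then obtain u0 where u0: "u0 \<in> {0..n}" "Mx = S u0" by auto
  have Su0: "S u0 = l * (\<Sum>k\<in>{u0..<n}. (norm (Dl N k \<omega>))^2) + (AA N n \<omega> - AA N u0 \<omega>)"
  proof -
    have "(\<Sum>k\<in>{u0..<n}. inner (bb N k \<omega>) (Dl N k \<omega>)) = AA N n \<omega> - AA N u0 \<omega>"
      unfolding AA_def lessThan_atLeast0 using u0(1) by (subst sum_diff_nat_ivl) auto
    then show ?thesis unfolding S_def by (simp add: sum.distrib sum_distrib_left alpha_eq)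
  qed
  have "(\<Sum>k\<in>{u0..<n}. (norm (Dl N k \<omega>))^2) \<le> SN"
    unfolding SN_def using n by (intro sum_mono2) auto
  then have Mxb: "Mx \<le> l * SN + AA N n \<omega> - AA N u0 \<omega>"
    using u0 Su0 l1 by (simp add: mult_left_mono)
  define x where "x = (l + norm (\<xi> \<omega>)) powr p * exp (p * l)"
  define y where "y = exp (p * l * SN)"
  define z where "z = exp (p * AA N n \<omega>)"
  define w where "w = exp (- p * AA N u0 \<omega>)"
  have pos: "0 < l + norm (\<xi> \<omega>)" using l1 by (metis add_pos_nonneg norm_ge_zero zero_less_one order_less_le_trans)
  have "\<bar>DN c T \<mu> \<sigma> W \<xi> N n \<omega>\<bar> powr p = (l + norm (\<xi> \<omega>)) powr p * exp ((l + Mx) * p)"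
    unfolding DNeq using pos by (simp add: powr_mult exp_powr_real abs_mult)
  also have "\<dots> \<le> (l + norm (\<xi> \<omega>)) powr p * exp (p * l + p * l * SN + p * AA N n \<omega> + (- p * AA N u0 \<omega>))"
  proof (intro mult_left_mono)
    have "(l + Mx) * p \<le> (l + (l * SN + AA N n \<omega> - AA N u0 \<omega>)) * p"
      using Mxb p by (intro mult_right_mono) auto
    then show "exp ((l + Mx) * p) \<le> exp (p * l + p * l * SN + p * AA N n \<omega> + (- p * AA N u0 \<omega>))"
      by (simp add: algebra_simps)
  qed simp
  also have "\<dots> = x * y * z * w" by (simp add: x_def y_def z_def w_def exp_add exp_diff exp_minus field_simps)
  also have "\<dots> \<le> y^2 + x^6 + z^6 + w^6" by (rule amgm4) (simp_all add: x_def y_def z_def w_def)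
  also have "y^2 = exp (2 * p * l * SN)" by (simp add: y_def exp_pow ac_simps)
  also have "x^6 = (l + norm (\<xi> \<omega>)) powr (6 * p) * exp (6 * p * l)"
    using pos by (simp add: x_def power_mult_distrib powr_power exp_pow ac_simps)
  also have "z^6 \<le> sqrt (Max ((\<lambda>n. XX (12 * p) N n \<omega>) ` {0..N}))"
  proof -
    have "z^6 = sqrt (XX (12 * p) N n \<omega>)"
      using sqrt_exp2[of "6 * p * AA N n \<omega>"] by (simp add: z_def XX_def exp_pow ac_simps)
    also have "\<dots> \<le> sqrt (Max ((\<lambda>n. XX (12 * p) N n \<omega>) ` {0..N}))"
      using n by (intro real_sqrt_le_mono Max_ge) auto
    finally show ?thesis .
  qed
  also have "w^6 \<le> sqrt (Max ((\<lambda>n. XX (- 12 * p) N n \<omega>) ` {0..N}))"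
  proof -
    have "w^6 = sqrt (XX (- 12 * p) N u0 \<omega>)"
      using sqrt_exp2[of "- 6 * p * AA N u0 \<omega>"] by (simp add: w_def XX_def exp_pow ac_simps)
    also have "\<dots> \<le> sqrt (Max ((\<lambda>n. XX (- 12 * p) N n \<omega>) ` {0..N}))"
      using n u0 by (intro real_sqrt_le_mono Max_ge) auto
    finally show ?thesis .
  qed
  finally show ?thesis by (simp add: l_def SN_def ac_simps)
qed

lemma Lsum_bound:
  assumes N0: "0 < N" and s: "0 \<le> s" and sh: "4 * s * (T / real N) \<le> 1" and nN: "n \<le> N"
  shows "(\<integral>\<^sup>+\<omega>. ennreal (exp (s * (\<Sum>k<n. (norm (Dl N k \<omega>))^2))) \<partial>M)
     \<le> ennreal (exp (4 * s * (T / real N) * CARD('m))) ^ n"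
  using nN
proof (induction n)
  case 0
  then show ?case by (simp add: emeasure_space_1)
next
  case (Suc n)
  have n: "n < N" using Suc by simp
  have r: "tt N n \<in> {0..T}" using tt_range[of n N] n by simp
  have Dm: "Dl N k \<in> borel_measurable (F (tt N n))" if "k < n" for k
    by (rule meas_mono[OF dW_meas]) (use that n tt_range[of "Suc k" N] tt_range[of n N] tt_mono[of "Suc k" n N] in auto)
  have Zm: "(\<lambda>\<omega>. ennreal (exp (s * (\<Sum>k<n. (norm (Dl N k \<omega>))^2)))) \<in> borel_measurable (F (tt N n))"
  proof -
    have "(\<lambda>\<omega>. (norm (Dl N k \<omega>))^2) \<in> borel_measurable (F (tt N n))" if "k < n" for k
      using Dm[OF that] by measurable
    then have [measurable]: "(\<lambda>\<omega>. \<Sum>k<n. (norm (Dl N k \<omega>))^2) \<in> borel_measurable (F (tt N n))"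
      by (intro borel_measurable_sum) auto
    show ?thesis by measurable
  qed
  have "(\<integral>\<^sup>+\<omega>. ennreal (exp (s * (\<Sum>k<Suc n. (norm (Dl N k \<omega>))^2))) \<partial>M)
     = (\<integral>\<^sup>+\<omega>. ennreal (exp (s * (\<Sum>k<n. (norm (Dl N k \<omega>))^2))) * ennreal (exp (s * (norm (Dl N n \<omega>))^2)) \<partial>M)"
    by (simp add: distrib_left exp_add ennreal_mult)
  also have "\<dots> \<le> (\<integral>\<^sup>+\<omega>. ennreal (exp (s * (\<Sum>k<n. (norm (Dl N k \<omega>))^2))) \<partial>M) * ennreal (exp (4 * s * (T / real N) * CARD('m)))"
    by (rule step_sq[OF n Zm s sh])
  also have "\<dots> \<le> ennreal (exp (4 * s * (T / real N) * CARD('m))) ^ n * ennreal (exp (4 * s * (T / real N) * CARD('m)))"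
    using Suc by (intro mult_right_mono) auto
  finally show ?case by (simp add: mult.commute)
qed

lemma LN_bound:
  assumes N0: "0 < N" and s: "0 \<le> s" and sh: "4 * s * (T / real N) \<le> 1"
  shows "(\<integral>\<^sup>+\<omega>. ennreal (exp (s * (\<Sum>k<N. (norm (Dl N k \<omega>))^2))) \<partial>M)
     \<le> ennreal (exp (4 * s * T * CARD('m)))"
proof -
  have "ennreal (exp (4 * s * (T / real N) * CARD('m))) ^ N = ennreal (exp (4 * s * (T / real N) * CARD('m)) ^ N)"
    by (simp add: ennreal_power)
  also have "exp (4 * s * (T / real N) * CARD('m)) ^ N = exp (4 * s * T * CARD('m))"
    using N0 by (simp add: exp_pow)
  finally show ?thesis using Lsum_bound[OF N0 s sh order_refl] by simp
qed

lemma maxX_bound: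
  assumes N0: "0 < N"
  shows "(\<integral>\<^sup>+\<omega>. ennreal (sqrt (Max ((\<lambda>n. XX r N n \<omega>) ` {0..N}))) \<partial>M) \<le> 1 + 4 * ennreal (exp (r^2 * KK^2 * T / 2))"
proof -
  have "(\<integral>\<^sup>+\<omega>. ennreal (sqrt (Max ((\<lambda>n. XX r N n \<omega>) ` {0..N}))) \<partial>M) \<le> 1 + 4 * (\<integral>\<^sup>+\<omega>. ennreal (XX r N N \<omega>) \<partial>M)"
    by (rule layer[OF N0 XX_meas XX_nonneg submart]) auto
  also have "\<dots> \<le> 1 + 4 * ennreal (exp (r^2 * KK^2 * T / 2))"
    by (intro add_left_mono mult_left_mono growthN[OF N0]) auto
  finally show ?thesis .
qed

lemma IXi_finite:
  assumes p: "1 \<le> p"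
  shows "(\<integral>\<^sup>+\<omega>. ennreal ((lam c T \<mu> \<sigma> + norm (\<xi> \<omega>)) powr (6 * p) * exp (6 * p * lam c T \<mu> \<sigma>)) \<partial>M) < \<infinity>"
proof -
  define l where "l = lam c T \<mu> \<sigma>"
  define q where "q = 6 * p"
  have q1: "1 \<le> q" using p by (simp add: q_def)
  have l0: "0 \<le> l" using lam_ge1 by (simp add: l_def)
  have xiM[measurable]: "\<xi> \<in> borel_measurable M" using meas_M[OF xi_meas] Tpos by simp
  have int: "integrable M (\<lambda>\<omega>. norm (\<xi> \<omega>) powr q)" using xi_mom q1 by blast
  have "(\<integral>\<^sup>+\<omega>. ennreal ((l + norm (\<xi> \<omega>)) powr q * exp (q * l)) \<partial>M)
      \<le> (\<integral>\<^sup>+\<omega>. ennreal (exp (q * l) * 2 powr q * l powr q) + ennreal (exp (q * l) * 2 powr q) * ennreal (norm (\<xi> \<omega>) powr q) \<partial>M)"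
  proof (intro nn_integral_mono)
    fix \<omega>
    have "(l + norm (\<xi> \<omega>)) powr q * exp (q * l) \<le> 2 powr q * (l powr q + norm (\<xi> \<omega>) powr q) * exp (q * l)"
      using l0 q1 by (intro mult_right_mono powr_sum_le) auto
    also have "\<dots> = exp (q * l) * 2 powr q * l powr q + exp (q * l) * 2 powr q * norm (\<xi> \<omega>) powr q"
      by (simp add: algebra_simps)
    finally show "ennreal ((l + norm (\<xi> \<omega>)) powr q * exp (q * l))
        \<le> ennreal (exp (q * l) * 2 powr q * l powr q) + ennreal (exp (q * l) * 2 powr q) * ennreal (norm (\<xi> \<omega>) powr q)"
      by (simp add: ennreal_plus[symmetric] ennreal_mult[symmetric] ennreal_leI del: ennreal_plus)
  qed
  also have "\<dots> = ennreal (exp (q * l) * 2 powr q * l powr q) + ennreal (exp (q * l) * 2 powr q) * (\<integral>\<^sup>+\<omega>. ennreal (norm (\<xi> \<omega>) powr q) \<partial>M)"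
    by (simp add: nn_integral_add nn_integral_cmult emeasure_space_1)
  also have "(\<integral>\<^sup>+\<omega>. ennreal (norm (\<xi> \<omega>) powr q) \<partial>M) = ennreal (\<integral>\<omega>. norm (\<xi> \<omega>) powr q \<partial>M)"
    by (rule nn_integral_eq_integral[OF int]) simp
  also have "ennreal (exp (q * l) * 2 powr q * l powr q) + ennreal (exp (q * l) * 2 powr q) * ennreal (\<integral>\<omega>. norm (\<xi> \<omega>) powr q \<partial>M) < \<infinity>"
    by (simp add: ennreal_mult_less_top)
  finally show ?thesis by (simp add: l_def q_def ac_simps)
qed

lemma final_bound:
  assumes p: "1 \<le> p" and NN: "8 * lam c T \<mu> \<sigma> * p * T \<le> real N"
  shows "(\<integral>\<^sup>+\<omega>. ennreal (Max ((\<lambda>n. \<bar>DN c T \<mu> \<sigma> W \<xi> N n \<omega>\<bar> powr p) ` {0..N})) \<partial>M)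
    \<le> ennreal (exp (4 * (2 * p * lam c T \<mu> \<sigma>) * T * CARD('m)))
      + (\<integral>\<^sup>+\<omega>. ennreal ((lam c T \<mu> \<sigma> + norm (\<xi> \<omega>)) powr (6 * p) * exp (6 * p * lam c T \<mu> \<sigma>)) \<partial>M)
      + (1 + 4 * ennreal (exp ((12 * p)^2 * KK^2 * T / 2)))
      + (1 + 4 * ennreal (exp ((- 12 * p)^2 * KK^2 * T / 2)))"
proof -
  define l where "l = lam c T \<mu> \<sigma>"
  have l1: "1 \<le> l" using lam_ge1 by (simp add: l_def)
  have "0 < 8 * l * p * T" using l1 p Tpos by simp
  then have "0 < real N" using NN unfolding l_def by linarith
  then have N0: "0 < N" by simp
  have s: "0 \<le> 2 * p * l" using l1 p by simp
  have sh: "4 * (2 * p * l) * (T / real N) \<le> 1"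
    using NN N0 by (simp add: l_def field_simps)
  have DM[measurable]: "Dl N k \<in> borel_measurable M" if "k < N" for k
    using meas_M[OF dW_meas[OF that]] that tt_range[of "Suc k" N] by auto
  have xiM[measurable]: "\<xi> \<in> borel_measurable M" using meas_M[OF xi_meas] Tpos by simp
  have XM[measurable]: "XX r N n \<in> borel_measurable M" if "n \<le> N" for r n
    using meas_M[OF XX_meas[OF that]] that tt_range[of n N] N0 by auto
  define Y where "Y \<omega> = exp (2 * p * l * (\<Sum>k<N. (norm (Dl N k \<omega>))^2))" for \<omega>
  define Xi where "Xi \<omega> = (l + norm (\<xi> \<omega>)) powr (6 * p) * exp (6 * p * l)" for \<omega>
  define Z where "Z r \<omega> = sqrt (Max ((\<lambda>n. XX r N n \<omega>) ` {0..N}))" for r \<omega>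
  have Ym: "Y \<in> borel_measurable M"
  proof -
    have [measurable]: "(\<lambda>\<omega>. \<Sum>k<N. (norm (Dl N k \<omega>))^2) \<in> borel_measurable M"
      by (intro borel_measurable_sum) auto
    show ?thesis unfolding Y_def by measurable
  qed
  have Xim: "Xi \<in> borel_measurable M" unfolding Xi_def by measurable
  have Zm: "Z r \<in> borel_measurable M" for r
  proof -
    have [measurable]: "(\<lambda>\<omega>. Max ((\<lambda>n. XX r N n \<omega>) ` {0..N})) \<in> borel_measurable M"
      by (rule borel_measurable_Max) (auto intro: XM)
    show ?thesis unfolding Z_def by measurable
  qed
  have Z0: "0 \<le> Z r \<omega>" for r \<omega>
  proof -
    have "XX r N 0 \<omega> \<le> Max ((\<lambda>n. XX r N n \<omega>) ` {0..N})" by (intro Max_ge) auto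
    then have "0 \<le> Max ((\<lambda>n. XX r N n \<omega>) ` {0..N})" using XX_nonneg[of r N 0 \<omega>] by linarith
    then show ?thesis unfolding Z_def by simp
  qed
  have "(\<integral>\<^sup>+\<omega>. ennreal (Max ((\<lambda>n. \<bar>DN c T \<mu> \<sigma> W \<xi> N n \<omega>\<bar> powr p) ` {0..N})) \<partial>M)
      \<le> (\<integral>\<^sup>+\<omega>. ennreal (Y \<omega>) + ennreal (Xi \<omega>) + ennreal (Z (12 * p) \<omega>) + ennreal (Z (- 12 * p) \<omega>) \<partial>M)"
  proof (intro nn_integral_mono)
    fix \<omega>
    have "Max ((\<lambda>n. \<bar>DN c T \<mu> \<sigma> W \<xi> N n \<omega>\<bar> powr p) ` {0..N}) \<le> Y \<omega> + Xi \<omega> + Z (12 * p) \<omega> + Z (- 12 * p) \<omega>"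
      unfolding Y_def Xi_def Z_def l_def using DN_bound[OF N0 _, of _ p \<omega>] p
      by (subst Max_le_iff) auto
    moreover have "0 \<le> Xi \<omega>" by (simp add: Xi_def)
    ultimately show "ennreal (Max ((\<lambda>n. \<bar>DN c T \<mu> \<sigma> W \<xi> N n \<omega>\<bar> powr p) ` {0..N}))
        \<le> ennreal (Y \<omega>) + ennreal (Xi \<omega>) + ennreal (Z (12 * p) \<omega>) + ennreal (Z (- 12 * p) \<omega>)"
      using Z0[of "12 * p" \<omega>] Z0[of "- 12 * p" \<omega>]
      by (simp add: ennreal_plus[symmetric] ennreal_leI Y_def del: ennreal_plus)
  qed
  also have "\<dots> = (\<integral>\<^sup>+\<omega>. ennreal (Y \<omega>) \<partial>M) + (\<integral>\<^sup>+\<omega>. ennreal (Xi \<omega>) \<partial>M)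
      + (\<integral>\<^sup>+\<omega>. ennreal (Z (12 * p) \<omega>) \<partial>M) + (\<integral>\<^sup>+\<omega>. ennreal (Z (- 12 * p) \<omega>) \<partial>M)"
    using Ym Xim Zm by (simp add: nn_integral_add)
  also have "\<dots> \<le> ennreal (exp (4 * (2 * p * l) * T * CARD('m)))
      + (\<integral>\<^sup>+\<omega>. ennreal (Xi \<omega>) \<partial>M)
      + (1 + 4 * ennreal (exp ((12 * p)^2 * KK^2 * T / 2)))
      + (1 + 4 * ennreal (exp ((- 12 * p)^2 * KK^2 * T / 2)))"
  proof (intro add_mono order_refl)
    show "(\<integral>\<^sup>+\<omega>. ennreal (Y \<omega>) \<partial>M) \<le> ennreal (exp (4 * (2 * p * l) * T * CARD('m)))"
      unfolding Y_def using LN_bound[OF N0 s sh] by simp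
    show "(\<integral>\<^sup>+\<omega>. ennreal (Z (12 * p) \<omega>) \<partial>M) \<le> 1 + 4 * ennreal (exp ((12 * p)^2 * KK^2 * T / 2))"
      unfolding Z_def by (rule maxX_bound[OF N0])
    show "(\<integral>\<^sup>+\<omega>. ennreal (Z (- 12 * p) \<omega>) \<partial>M) \<le> 1 + 4 * ennreal (exp ((- 12 * p)^2 * KK^2 * T / 2))"
      unfolding Z_def by (rule maxX_bound[OF N0])
  qed
  finally show ?thesis by (simp add: Xi_def l_def)
qed

end


theorem lemma3p5:
  fixes M :: "'a measure" and T c :: real and F :: "real \<Rightarrow> 'a measure"
    and W :: "real \<Rightarrow> 'a \<Rightarrow> real^'m::finite" and \<xi> :: "'a \<Rightarrow> real^'d::finite"
    and \<mu> :: "real^'d \<Rightarrow> real^'d" and \<mu>' :: "real^'d \<Rightarrow> ((real^'d) \<Rightarrow>\<^sub>L (real^'d))"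
    and \<sigma> :: "real^'d \<Rightarrow> real^'m^'d"
  assumes "prob_space M"
    and "T > 0"
    and "normal_filtration M T F"
    and "std_brownian_motion M T F W"
    and "\<xi> \<in> borel_measurable (F 0)"
    and "\<forall>p::real. p \<ge> 1 \<longrightarrow> integrable M (\<lambda>\<omega>. norm (\<xi> \<omega>) powr p)"
    and "\<forall>x. (\<mu> has_derivative blinfun_apply (\<mu>' x)) (at x)"
    and "continuous_on UNIV \<mu>'"
    and "c > 0"
    and "\<forall>x. norm (\<mu>' x) \<le> c * (1 + norm x powr c)"
    and "\<forall>x y. op_norm (\<sigma> x - \<sigma> y) \<le> c * norm (x - y)"
    and "\<forall>x y. inner (x - y) (\<mu> x - \<mu> y) \<le> c * (norm (x - y))\<^sup>2"
  shows "\<forall>p::real. p \<ge> 1 \<longrightarrow>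
    (SUP N\<in>{N::nat. real N \<ge> 8 * lam c T \<mu> \<sigma> * p * T}.
       \<integral>\<^sup>+ \<omega>. ennreal (Max ((\<lambda>n. \<bar>DN c T \<mu> \<sigma> W \<xi> N n \<omega>\<bar> powr p) ` {0..N})) \<partial>M) < \<infinity>"
proof -
  interpret S: setting M T c F W \<xi> \<mu> \<mu>' \<sigma>
    by (intro setting.intro setting_axioms.intro) (use assms in auto)
  show ?thesis
  proof (intro allI impI)
    fix p :: real assume p: "1 \<le> p"
    define C where "C = ennreal (exp (4 * (2 * p * lam c T \<mu> \<sigma>) * T * CARD('m)))
      + (\<integral>\<^sup>+\<omega>. ennreal ((lam c T \<mu> \<sigma> + norm (\<xi> \<omega>)) powr (6 * p) * exp (6 * p * lam c T \<mu> \<sigma>)) \<partial>M)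
      + (1 + 4 * ennreal (exp ((12 * p)^2 * S.KK^2 * T / 2)))
      + (1 + 4 * ennreal (exp ((- 12 * p)^2 * S.KK^2 * T / 2)))"
    have "(SUP N\<in>{N::nat. real N \<ge> 8 * lam c T \<mu> \<sigma> * p * T}.
       \<integral>\<^sup>+ \<omega>. ennreal (Max ((\<lambda>n. \<bar>DN c T \<mu> \<sigma> W \<xi> N n \<omega>\<bar> powr p) ` {0..N})) \<partial>M) \<le> C"
      unfolding C_def by (rule SUP_least) (use S.final_bound[OF p] in auto)
    also have "C < \<infinity>"
      using S.IXi_finite[OF p] unfolding C_def by (simp add: ennreal_mult_less_top)
    finally show "(SUP N\<in>{N::nat. real N \<ge> 8 * lam c T \<mu> \<sigma> * p * T}.
       \<integral>\<^sup>+ \<omega>. ennreal (Max ((\<lambda>n. \<bar>DN c T \<mu> \<sigma> W \<xi> N n \<omega>\<bar> powr p) ` {0..N})) \<partial>M) < \<infinity>" .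
  qed
qed

end
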